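(* Assume the setting described in the context. Then, both for general contracts and for binary contracts, the second-best cost converges to the first-best cost exponentially at rate $r:=\min_{a\in A^-(c,a^* )}\mathrm{KL}(\mu_a,\mu_{a^*})$; that is, $$C^{\mathrm{SB}}_n(\mu,u,c,a^* )-C^{\mathrm{FB}}(u,c,a^* )=\exp[-r n+o(n)]\quad\text{and}\quad C^{\mathrm{bin}}_n(\mu,u,c,a^* )-C^{\mathrm{FB}}(u,c,a^* )=\exp[-r n+o(n)]$$ as $n\to\infty$.
   Context: A principal and an agent. The agent chooses an action from a finite set $A$. A monitoring technology $\mu=(\mu_a)_{a\in A}$ consists of Borel probability measures $\mu_a$ on a signal space $X$ (a subset of a Euclidean space) such that: $\mu_a\neq\mu_{a'}$ for $a\neq a'$; $\mu_{a'}$ is absolutely continuous with respect to $\mu_a$ for all $a,a'\in A$; and $\int \big(\frac{d\mu_{a'}}{d\mu_a}(x)\big)^\lambda d\mu_a(x)<\infty$ for all $\lambda>0$ and all $a,a'$. If the agent chooses $a$, the principal observes $x^n=(x_1,\dots,x_n)$, i.i.d. draws from $\mu_a$; $\mathbb{P}_a,\mathbb{E}_a,\mathrm{Var}_a$ denote the corresponding probability, expectation and variance. Fix a target action $a^*\in A$ and a wage lower bound $\underline w\in\mathbb{R}$. The agent has utility $u:[\underline w,\infty)\to\mathbb{R}$ over money and cost $c:A\to\mathbb{R}$, with outside option $0$, and: (i) $u$ is $C^2$ with $u'>0$, $u''<0$ and $\lim_{w\to\infty}u'(w)=0$; (ii) $c(A)\subseteq\mathrm{int}\,u([\underline w,\infty))$;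 (iii) $c(a^* )>c(a)$ for some $a\in A$ and $c(a^* )\neq c(a)$ for all $a\neq a^*$. Let $h:=u^{-1}$. A contract is a measurable $w:X^n\to[\underline w,\infty)$; it satisfies (IC) if $\mathbb{E}_{a^*}[u(w(x^n))]-c(a^* )\ge \mathbb{E}_a[u(w(x^n))]-c(a)$ for all $a\in A$, and (IR) if $\mathbb{E}_{a^*}[u(w(x^n))]-c(a^* )\ge0$. The second-best cost $C^{\mathrm{SB}}_n(\mu,u,c,a^* )$ is the infimum of $\mathbb{E}_{a^*}[w(x^n)]$ over contracts satisfying (IC) and (IR); $C^{\mathrm{bin}}_n(\mu,u,c,a^* )$ is the same infimum restricted to binary contracts, i.e. those with $|w(X^n)|=2$. The first-best cost is $C^{\mathrm{FB}}(u,c,a^* )=h(c(a^* ))$. $A^-(c,a^* ):=\{a\in A:c(a)<c(a^* )\}$. For probability measures $\nu,\nu'$, $\mathrm{KL}(\nu,\nu')=\int\log\frac{d\nu}{d\nu'}\,d\nu$ if $\nu\ll\nu'$ and $+\infty$ otherwise. Notation: $f(n)=\exp[-rn+o(n)]$ means $\frac1n\log f(n)\to -r$ as $n\to\infty$. *)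

theory Defs
  imports "HOL-Probability.Probability"
begin

definition monitoring_tech ::
  "'x::euclidean_space set \<Rightarrow> ('a \<Rightarrow> 'x measure) \<Rightarrow> bool" where
  "monitoring_tech X \<mu> \<longleftrightarrow>
     (\<forall>a. prob_space (\<mu> a) \<and> space (\<mu> a) = X \<and> sets (\<mu> a) = sets (restrict_space borel X)) \<and>
     (\<forall>a a'. a \<noteq> a' \<longrightarrow> \<mu> a \<noteq> \<mu> a') \<and>
     (\<forall>a a'. absolutely_continuous (\<mu> a) (\<mu> a')) \<and>
     (\<forall>a a' (p::real). p > 0 \<longrightarrow>
        (\<integral>\<^sup>+ x. ennreal (enn2real (RN_deriv (\<mu> a) (\<mu> a') x) powr p) \<partial>\<mu> a) < \<infinity>)"

definition sig :: "('a \<Rightarrow> 'x measure) \<Rightarrow> 'a \<Rightarrow> nat \<Rightarrow> (nat \<Rightarrow> 'x) measure" where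
  "sig \<mu> a n = PiM {..<n} (\<lambda>_. \<mu> a)"

text \<open>Expectation of a function bounded below by lb, valued in (-\<infinity>, \<infinity>].\<close>
definition expect_lb :: "'b measure \<Rightarrow> ('b \<Rightarrow> real) \<Rightarrow> real \<Rightarrow> ereal" where
  "expect_lb M f lb = ereal lb + enn2ereal (\<integral>\<^sup>+ x. ennreal (f x - lb) \<partial>M)"

definition is_contract ::
  "('a \<Rightarrow> 'x measure) \<Rightarrow> 'a \<Rightarrow> real \<Rightarrow> nat \<Rightarrow> ((nat \<Rightarrow> 'x) \<Rightarrow> real) \<Rightarrow> bool" where
  "is_contract \<mu> ast wl n w \<longleftrightarrow>
     w \<in> borel_measurable (sig \<mu> ast n) \<and> (\<forall>x\<in>space (sig \<mu> ast n). w x \<ge> wl)"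

definition IC ::
  "('a \<Rightarrow> 'x measure) \<Rightarrow> (real \<Rightarrow> real) \<Rightarrow> ('a \<Rightarrow> real) \<Rightarrow> 'a \<Rightarrow> real \<Rightarrow> nat
     \<Rightarrow> ((nat \<Rightarrow> 'x) \<Rightarrow> real) \<Rightarrow> bool" where
  "IC \<mu> u c ast wl n w \<longleftrightarrow>
     (\<forall>a. expect_lb (sig \<mu> ast n) (u \<circ> w) (u wl) - ereal (c ast)
          \<ge> expect_lb (sig \<mu> a n) (u \<circ> w) (u wl) - ereal (c a))"

definition IR ::
  "('a \<Rightarrow> 'x measure) \<Rightarrow> (real \<Rightarrow> real) \<Rightarrow> ('a \<Rightarrow> real) \<Rightarrow> 'a \<Rightarrow> real \<Rightarrow> nat
     \<Rightarrow> ((nat \<Rightarrow> 'x) \<Rightarrow> real) \<Rightarrow> bool" where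
  "IR \<mu> u c ast wl n w \<longleftrightarrow>
     expect_lb (sig \<mu> ast n) (u \<circ> w) (u wl) - ereal (c ast) \<ge> 0"

definition C_SB ::
  "('a \<Rightarrow> 'x measure) \<Rightarrow> (real \<Rightarrow> real) \<Rightarrow> ('a \<Rightarrow> real) \<Rightarrow> 'a \<Rightarrow> real \<Rightarrow> nat \<Rightarrow> ereal" where
  "C_SB \<mu> u c ast wl n = Inf {expect_lb (sig \<mu> ast n) w wl | w.
      is_contract \<mu> ast wl n w \<and> IC \<mu> u c ast wl n w \<and> IR \<mu> u c ast wl n w}"

definition C_bin ::
  "('a \<Rightarrow> 'x measure) \<Rightarrow> (real \<Rightarrow> real) \<Rightarrow> ('a \<Rightarrow> real) \<Rightarrow> 'a \<Rightarrow> real \<Rightarrow> nat \<Rightarrow> ereal" where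
  "C_bin \<mu> u c ast wl n = Inf {expect_lb (sig \<mu> ast n) w wl | w.
      is_contract \<mu> ast wl n w \<and> card (w ` space (sig \<mu> ast n)) = 2 \<and>
      IC \<mu> u c ast wl n w \<and> IR \<mu> u c ast wl n w}"

definition C_FB :: "(real \<Rightarrow> real) \<Rightarrow> ('a \<Rightarrow> real) \<Rightarrow> 'a \<Rightarrow> real \<Rightarrow> real" where
  "C_FB u c ast wl = inv_into {wl..} u (c ast)"

definition A_minus :: "('a \<Rightarrow> real) \<Rightarrow> 'a \<Rightarrow> 'a set" where
  "A_minus c ast = {a. c a < c ast}"

text \<open>KL(mu_a, mu_a*) = integral over mu_a of log (d mu_a / d mu_a*)
  = KL_divergence (exp 1) (mu a*) (mu a) in the library's convention.\<close>

text \<open>f(n) = exp[-r n + o(n)]: f eventually positive and (1/n) log f(n) tends to -r.\<close>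
definition exp_rate :: "(nat \<Rightarrow> ereal) \<Rightarrow> real \<Rightarrow> bool" where
  "exp_rate f r \<longleftrightarrow> (\<forall>\<^sub>F n in sequentially. 0 < f n \<and> f n < \<infinity>) \<and>
     ((\<lambda>n. ln (real_of_ereal (f n)) / real n) \<longlonglongrightarrow> - r)"

end

theory Submission
  imports Defs "HOL-Probability.Probability"
begin

locale util =
  fixes u u' u'' :: "real \<Rightarrow> real" and wl :: real
  assumes d1: "\<And>w. w \<ge> wl \<Longrightarrow> (u has_real_derivative u' w) (at w within {wl..})"
    and d2: "\<And>w. w \<ge> wl \<Longrightarrow> (u' has_real_derivative u'' w) (at w within {wl..})"
    and upos: "\<And>w. w \<ge> wl \<Longrightarrow> u' w > 0"
    and uneg: "\<And>w. w \<ge> wl \<Longrightarrow> u'' w < 0"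
    and ucont2: "continuous_on {wl..} u''"
begin

lemma d1': "w > wl \<Longrightarrow> (u has_real_derivative u' w) (at w)"
  using d1[of w] by (simp add: at_within_interior[of w "{wl..}"])
lemma d2': "w > wl \<Longrightarrow> (u' has_real_derivative u'' w) (at w)"
  using d2[of w] by (simp add: at_within_interior[of w "{wl..}"])

lemma ucont: "continuous_on {wl..} u"
  using d1 by (auto simp: continuous_on_eq_continuous_within intro: DERIV_continuous)
lemma ucont1: "continuous_on {wl..} u'"
  using d2 by (auto simp: continuous_on_eq_continuous_within intro: DERIV_continuous)

lemma u_strict: "wl \<le> x \<Longrightarrow> x < y \<Longrightarrow> u x < u y"
  apply (rule DERIV_pos_imp_increasing_open[of x y u])
    apply simp
  subgoal for z by (rule exI[of _ "u' z"]) (auto intro!: d1' upos)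
  by (auto intro!: continuous_on_subset[OF ucont])

lemma u_mono: "wl \<le> x \<Longrightarrow> x \<le> y \<Longrightarrow> u x \<le> u y"
  using u_strict[of x y] by (cases "x = y") auto

lemma u'_anti: "wl \<le> x \<Longrightarrow> x \<le> y \<Longrightarrow> u' y \<le> u' x"
  apply (rule DERIV_nonpos_imp_decreasing_open[of x y u'])
    apply simp
  subgoal for z by (rule exI[of _ "u'' z"]) (auto intro!: d2' less_imp_le[OF uneg])
  by (auto intro!: continuous_on_subset[OF ucont1])

lemma tangent:
  assumes "wl \<le> x" "wl \<le> y"
  shows "u y \<le> u x + u' x * (y - x)"
proof -
  define k where "k t = u x + u' x * (t - x) - u t" for t
  have dk: "(k has_real_derivative (u' x - u' t)) (at t)" if "t > wl" for t
    unfolding k_def using d1'[OF that] by (auto intro!: derivative_eq_intros)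
  have ck: "continuous_on {wl..} k" unfolding k_def
    by (intro continuous_intros ucont)
  show ?thesis
  proof (cases "x \<le> y")
    case True
    have "k x \<le> k y"
      apply (rule DERIV_nonneg_imp_increasing_open[OF True, of k])
      subgoal for z by (rule exI[of _ "u' x - u' z"]) (use assms in \<open>auto intro!: dk u'_anti\<close>)
      using assms by (auto intro!: continuous_on_subset[OF ck])
    thus ?thesis by (simp add: k_def)
  next
    case False
    have "k y \<ge> k x"
      apply (rule DERIV_nonpos_imp_decreasing_open[of y x k])
      using False apply simp
      subgoal for z by (rule exI[of _ "u' x - u' z"]) (use assms in \<open>auto intro!: dk u'_anti\<close>)
      using assms by (auto intro!: continuous_on_subset[OF ck])
    thus ?thesis by (simp add: k_def)
  qed
qed

lemma lipschitz:
  assumes "wl \<le> x" "x \<le> y"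
  shows "u y - u x \<le> u' wl * (y - x)"
proof -
  have "u y \<le> u x + u' x * (y - x)" using tangent assms by auto
  moreover have "u' x * (y - x) \<le> u' wl * (y - x)"
    using u'_anti[of wl x] assms by (intro mult_right_mono) auto
  ultimately show ?thesis by linarith
qed

lemma kappa_exists:
  "\<exists>\<kappa>>0. \<forall>t\<in>{wl..B}. u'' t \<le> -\<kappa>"
proof (cases "wl \<le> B")
  case True
  have "compact {wl..B}" by simp
  moreover have "{wl..B} \<noteq> {}" using True by simp
  moreover have "continuous_on {wl..B} (\<lambda>t. - u'' t)"
    by (intro continuous_intros continuous_on_subset[OF ucont2]) auto
  ultimately obtain t0 where t0: "t0 \<in> {wl..B}" "\<forall>t\<in>{wl..B}. - u'' t0 \<le> - u'' t"
    using continuous_attains_inf[of "{wl..B}" "\<lambda>t. - u'' t"] by blast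
  have "- u'' t0 > 0" using uneg[of t0] t0 by auto
  thus ?thesis using t0 by (intro exI[of _ "- u'' t0"]) auto
next
  case False thus ?thesis by (intro exI[of _ 1]) auto
qed

lemma strong:
  assumes "wl \<le> w" "w \<le> W" "\<kappa> > 0" "\<forall>t\<in>{wl..W}. u'' t \<le> -\<kappa>"
  shows "u w \<le> u W + u' W * (w - W) - \<kappa> / 2 * (W - w)^2"
proof -
  define g where "g t = u' t + \<kappa> * t" for t
  have dg: "(g has_real_derivative (u'' t + \<kappa>)) (at t)" if "t > wl" for t
    unfolding g_def using d2'[OF that] by (auto intro!: derivative_eq_intros)
  have cg: "continuous_on {wl..} g" unfolding g_def by (intro continuous_intros ucont1)
  have gdec: "g s \<le> g t" if "wl \<le> t" "t \<le> s" "s \<le> W" for s t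
    apply (rule DERIV_nonpos_imp_decreasing_open[OF that(2), of g])
    subgoal for z proof (rule exI[of _ "u'' z + \<kappa>"], intro conjI)
      assume z: "t < z" "z < s"
      show "(g has_real_derivative u'' z + \<kappa>) (at z)" using z that by (intro dg) auto
      have "u'' z \<le> - \<kappa>" using assms(4) z that by auto
      thus "u'' z + \<kappa> \<le> 0" by simp
    qed
    using that by (auto intro!: continuous_on_subset[OF cg])
  define h where "h t = u W + u' W * (t - W) - \<kappa> / 2 * (W - t)^2 - u t" for t
  have dh: "(h has_real_derivative (u' W + \<kappa> * (W - t) - u' t)) (at t)" if "t > wl" for t
    unfolding h_def using d1'[OF that] by (auto intro!: derivative_eq_intros simp: algebra_simps power2_eq_square)
  have ch: "continuous_on {wl..} h" unfolding h_def by (intro continuous_intros ucont)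
  have "h w \<ge> h W"
  proof (rule DERIV_nonpos_imp_decreasing_open[OF assms(2)])
    fix t assume t: "w < t" "t < W"
    have "g W \<le> g t" using gdec[of t W] t assms by auto
    hence "u' W + \<kappa> * (W - t) - u' t \<le> 0" by (simp add: g_def algebra_simps)
    thus "\<exists>y. (h has_real_derivative y) (at t) \<and> y \<le> 0"
      using dh[of t] t assms by auto
  next
    show "continuous_on {w..W} h" by (rule continuous_on_subset[OF ch]) (use assms in auto)
  qed
  thus ?thesis by (simp add: h_def)
qed

end

lemma mt_prob: "monitoring_tech X \<mu> \<Longrightarrow> prob_space (\<mu> a)"
  by (simp add: monitoring_tech_def)
lemma mt_sets: "monitoring_tech X \<mu> \<Longrightarrow> sets (\<mu> a) = sets (\<mu> b)"
  by (simp add: monitoring_tech_def)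
lemma mt_space: "monitoring_tech X \<mu> \<Longrightarrow> space (\<mu> a) = X"
  by (simp add: monitoring_tech_def)
lemma mt_ac: "monitoring_tech X \<mu> \<Longrightarrow> absolutely_continuous (\<mu> a) (\<mu> b)"
  by (simp add: monitoring_tech_def)

lemma mt_density:
  assumes mt: "monitoring_tech X \<mu>"
  shows "\<exists>L. L \<in> borel_measurable (\<mu> b) \<and> (\<forall>x. 0 < L x) \<and>
           \<mu> a = density (\<mu> b) (\<lambda>x. ennreal (L x)) \<and>
           (AE x in \<mu> b. ennreal (L x) = RN_deriv (\<mu> b) (\<mu> a) x)"
proof -
  interpret pb: prob_space "\<mu> b" using mt_prob[OF mt] .
  interpret pa: prob_space "\<mu> a" using mt_prob[OF mt] .
  define R where "R = RN_deriv (\<mu> b) (\<mu> a)"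
  have acab: "absolutely_continuous (\<mu> b) (\<mu> a)" using mt_ac[OF mt] .
  have acba: "absolutely_continuous (\<mu> a) (\<mu> b)" using mt_ac[OF mt] .
  have sab: "sets (\<mu> a) = sets (\<mu> b)" using mt_sets[OF mt] .
  have dens: "density (\<mu> b) R = \<mu> a"
    unfolding R_def by (rule pb.density_RN_deriv[OF acab sab])
  have Rm[measurable]: "R \<in> borel_measurable (\<mu> b)" unfolding R_def by simp
  have fin: "AE x in \<mu> b. R x \<noteq> \<infinity>"
    unfolding R_def by (rule pb.RN_deriv_finite[OF _ acab sab]) (simp add: pa.sigma_finite_measure_axioms)
  define Z where "Z = {x\<in>space (\<mu> b). R x = 0}"
  have Zs: "Z \<in> sets (\<mu> b)" unfolding Z_def by measurable
  have "emeasure (\<mu> a) Z = (\<integral>\<^sup>+x. R x * indicator Z x \<partial>\<mu> b)"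
    using Zs by (subst dens[symmetric]) (simp add: emeasure_density)
  also have "\<dots> = 0"
    by (rule nn_integral_0_iff_AE[THEN iffD2]) (auto simp: Z_def indicator_def)
  finally have "Z \<in> null_sets (\<mu> a)" using Zs sab by (simp add: null_sets_def)
  hence "Z \<in> null_sets (\<mu> b)" using acba unfolding absolutely_continuous_def by auto
  hence nz: "AE x in \<mu> b. R x \<noteq> 0"
    by (rule AE_I') (auto simp: Z_def)
  define L where "L x = (if R x = 0 \<or> R x = \<infinity> then 1 else enn2real (R x))" for x
  have Lm: "L \<in> borel_measurable (\<mu> b)" unfolding L_def by measurable
  have Lpos: "\<forall>x. 0 < L x"
    by (auto simp: L_def enn2real_positive_iff less_top intro: gr_zeroI)
  have ae: "AE x in \<mu> b. ennreal (L x) = R x"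
    using fin nz by eventually_elim (auto simp: L_def ennreal_enn2real_if less_top)
  have "\<mu> a = density (\<mu> b) (\<lambda>x. ennreal (L x))"
    unfolding dens[symmetric] by (rule density_cong) (use Lm ae in auto)
  with Lm Lpos ae show ?thesis unfolding R_def by blast
qed

lemma indicator_PiE_prod:
  assumes "finite I" "x \<in> extensional I"
  shows "(indicator (Pi\<^sub>E I A) x :: ennreal) = (\<Prod>i\<in>I. indicator (A i) (x i))"
proof (cases "x \<in> Pi\<^sub>E I A")
  case True thus ?thesis by (auto simp: PiE_iff)
next
  case False
  then obtain i where "i \<in> I" "x i \<notin> A i" using assms(2) by (auto simp: PiE_iff)
  hence "indicator (A i) (x i) = (0::ennreal)" by simp
  hence "(\<Prod>i\<in>I. indicator (A i) (x i)) = (0::ennreal)"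
    using \<open>i \<in> I\<close> assms(1) by (metis prod_zero)
  thus ?thesis using False by simp
qed

lemma PiM_density_eq:
  assumes fin: "finite I" and sf: "sigma_finite_measure (density M f)" and sfM: "sigma_finite_measure M"
    and f[measurable]: "f \<in> borel_measurable M"
  shows "PiM I (\<lambda>_. density M f) = density (PiM I (\<lambda>_. M)) (\<lambda>x. \<Prod>i\<in>I. f (x i))"
proof -
  interpret D: product_sigma_finite "\<lambda>_. density M f"
    using sf by (simp add: product_sigma_finite_def)
  interpret P: product_sigma_finite "\<lambda>_. M"
    using sfM by (simp add: product_sigma_finite_def)
  have "density (PiM I (\<lambda>_. M)) (\<lambda>x. \<Prod>i\<in>I. f (x i)) = PiM I (\<lambda>_. density M f)"
  proof (rule D.PiM_eqI[OF fin])
    show "sets (density (PiM I (\<lambda>_. M)) (\<lambda>x. \<Prod>i\<in>I. f (x i))) = sets (PiM I (\<lambda>_. density M f))"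
      unfolding sets_density by (rule sets_PiM_cong) simp_all
  next
    fix A assume A: "\<And>i. i \<in> I \<Longrightarrow> A i \<in> sets (density M f)"
    hence A': "\<And>i. i \<in> I \<Longrightarrow> A i \<in> sets M" by simp
    have PE: "Pi\<^sub>E I A \<in> sets (PiM I (\<lambda>_. M))" using A' by (intro sets_PiM_I_finite fin) auto
    have "emeasure (density (PiM I (\<lambda>_. M)) (\<lambda>x. \<Prod>i\<in>I. f (x i))) (Pi\<^sub>E I A)
        = (\<integral>\<^sup>+x. (\<Prod>i\<in>I. f (x i)) * indicator (Pi\<^sub>E I A) x \<partial>PiM I (\<lambda>_. M))"
      using PE by (simp add: emeasure_density)
    also have "\<dots> = (\<integral>\<^sup>+x. (\<Prod>i\<in>I. f (x i) * indicator (A i) (x i)) \<partial>PiM I (\<lambda>_. M))"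
      by (intro nn_integral_cong) (simp add: prod.distrib fin space_PiM indicator_PiE_prod[OF fin, symmetric] PiE_iff)
    also have "\<dots> = (\<Prod>i\<in>I. \<integral>\<^sup>+y. f y * indicator (A i) y \<partial>M)"
      using A' by (subst P.product_nn_integral_prod) (auto simp: fin)
    also have "\<dots> = (\<Prod>i\<in>I. emeasure (density M f) (A i))"
      using A' by (intro prod.cong refl) (simp add: emeasure_density)
    finally show "emeasure (density (PiM I (\<lambda>_. M)) (\<lambda>x. \<Prod>i\<in>I. f (x i))) (Pi\<^sub>E I A) =
        (\<Prod>i\<in>I. emeasure (density M f) (A i))" .
  qed
  thus ?thesis by simp
qed

lemma PiM_nn_integral_prod:
  assumes "prob_space M" "f \<in> borel_measurable M" "finite I"
  shows "(\<integral>\<^sup>+x. (\<Prod>i\<in>I. f (x i)) \<partial>PiM I (\<lambda>_. M)) = (integral\<^sup>N M f) ^ card I"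
proof -
  interpret P: product_sigma_finite "\<lambda>_. M"
    using assms by (simp add: product_sigma_finite_def prob_space_imp_sigma_finite)
  show ?thesis using assms by (subst P.product_nn_integral_prod) auto
qed

lemma PiM_Markov:
  assumes "prob_space M" "f \<in> borel_measurable M" "finite I"
  shows "T * emeasure (PiM I (\<lambda>_. M)) {x\<in>space (PiM I (\<lambda>_. M)). T \<le> (\<Prod>i\<in>I. f (x i))}
         \<le> (integral\<^sup>N M f) ^ card I"
proof -
  note [measurable] = assms(2)
  have S: "{x\<in>space (PiM I (\<lambda>_. M)). T \<le> (\<Prod>i\<in>I. f (x i))} \<in> sets (PiM I (\<lambda>_. M))"
    using assms by measurable
  have "T * emeasure (PiM I (\<lambda>_. M)) {x\<in>space (PiM I (\<lambda>_. M)). T \<le> (\<Prod>i\<in>I. f (x i))}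
      = (\<integral>\<^sup>+x. T * indicator {x\<in>space (PiM I (\<lambda>_. M)). T \<le> (\<Prod>i\<in>I. f (x i))} x \<partial>PiM I (\<lambda>_. M))"
    using S by (simp add: nn_integral_cmult_indicator)
  also have "\<dots> \<le> (\<integral>\<^sup>+x. (\<Prod>i\<in>I. f (x i)) \<partial>PiM I (\<lambda>_. M))"
    by (intro nn_integral_mono) (auto simp: indicator_def)
  also have "\<dots> = (integral\<^sup>N M f) ^ card I" using PiM_nn_integral_prod[OF assms] .
  finally show ?thesis .
qed

lemma exp_le_quad: "exp (x::real) \<le> 1 + x + x^2 * exp \<bar>x\<bar>"
proof -
  obtain t where t: "\<bar>t\<bar> \<le> \<bar>x\<bar>" "exp x = (\<Sum>m<2. x^m / fact m) + (exp t / fact 2) * x^2"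
    using Maclaurin_exp_le[of x 2] by blast
  have e: "exp t \<le> exp \<bar>x\<bar>" using t(1) by simp
  have "(exp t / 2) * x^2 \<le> exp t * x^2"
    by (intro mult_right_mono) (auto simp: less_imp_le)
  also have "\<dots> \<le> exp \<bar>x\<bar> * x^2"
    by (intro mult_right_mono e) auto
  finally have "(exp t / 2) * x^2 \<le> x^2 * exp \<bar>x\<bar>" by (simp add: mult.commute)
  moreover have "(\<Sum>m<2. x^m / fact m) = 1 + x"
    by (simp add: numeral_2_eq_2)
  moreover have "(fact 2 :: real) = 2" by (simp add: numeral_2_eq_2)
  ultimately show ?thesis using t(2) by (simp add: algebra_simps)
qed

lemma expect_lb_int:
  assumes "prob_space M" "f \<in> borel_measurable M" "\<forall>x\<in>space M. lb \<le> f x" "integrable M f"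
  shows "expect_lb M f lb = ereal (integral\<^sup>L M f)"
proof -
  interpret prob_space M by fact
  have i: "integrable M (\<lambda>x. f x - lb)" using assms(4) by auto
  have "(\<integral>\<^sup>+x. ennreal (f x - lb) \<partial>M) = ennreal (\<integral>x. f x - lb \<partial>M)"
    using assms by (intro nn_integral_eq_integral i) (auto intro!: AE_I2)
  moreover have "(\<integral>x. f x - lb \<partial>M) = integral\<^sup>L M f - lb"
    using assms(4) by (simp add: prob_space)
  moreover have "integral\<^sup>L M f - lb \<ge> 0"
  proof -
    have "(\<integral>x. f x - lb \<partial>M) \<ge> 0" using assms(3) by (intro integral_nonneg_AE) (auto intro!: AE_I2)
    thus ?thesis using \<open>(\<integral>x. f x - lb \<partial>M) = integral\<^sup>L M f - lb\<close> by simp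
  qed
  ultimately show ?thesis unfolding expect_lb_def by simp
qed

lemma expect_lb_fin:
  assumes "prob_space M" "f \<in> borel_measurable M" "\<forall>x\<in>space M. lb \<le> f x" "expect_lb M f lb \<noteq> \<infinity>"
  shows "integrable M f"
proof -
  interpret prob_space M by fact
  have "(\<integral>\<^sup>+x. ennreal (f x - lb) \<partial>M) < \<infinity>"
    using assms(4) unfolding expect_lb_def by (auto simp: top_unique less_top)
  hence "integrable M (\<lambda>x. f x - lb)"
    using assms by (intro integrableI_nonneg) (auto intro!: AE_I2)
  hence "integrable M (\<lambda>x. (f x - lb) + lb)" by (intro Bochner_Integration.integrable_add) auto
  thus ?thesis by simp
qed

context util begin

lemma meas_uw:
  assumes "w \<in> borel_measurable M" "\<forall>x\<in>space M. wl \<le> w x"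
  shows "(\<lambda>x. u (w x)) \<in> borel_measurable M"
proof -
  have cm: "continuous_on UNIV (\<lambda>t. max wl t)"
    by (intro continuous_on_max continuous_on_const continuous_on_id)
  have c: "continuous_on UNIV (\<lambda>t. u (max wl t))"
    by (rule continuous_on_compose2[OF ucont cm]) auto
  have m: "(\<lambda>x. u (max wl (w x))) \<in> borel_measurable M"
    using borel_measurable_continuous_onI[OF c] assms(1) by (rule measurable_compose[rotated])
  have eq: "\<And>x. x \<in> space M \<Longrightarrow> u (max wl (w x)) = u (w x)" using assms(2) by (simp add: max_def)
  show ?thesis
    using iffD1[OF measurable_cong[of M "\<lambda>x. u (max wl (w x))" "\<lambda>x. u (w x)" borel, OF eq] m] .
qed

lemma LB_core:
  fixes P0 :: "'b measure" and Lam :: "'b \<Rightarrow> real" and w :: "'b \<Rightarrow> real"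
  assumes P0: "prob_space P0" and Pa: "Pa = density P0 (\<lambda>x. ennreal (Lam x))" "prob_space Pa"
    and Lm[measurable]: "Lam \<in> borel_measurable P0" and Lnn: "\<forall>x. 0 \<le> Lam x"
    and wm[measurable]: "w \<in> borel_measurable P0" and wge: "\<forall>x\<in>space P0. wl \<le> w x"
    and IC: "expect_lb Pa (u \<circ> w) (u wl) - ereal ca \<le> expect_lb P0 (u \<circ> w) (u wl) - ereal cs"
    and IR: "expect_lb P0 (u \<circ> w) (u wl) - ereal cs \<ge> 0"
    and Dpos: "ca < cs"
    and wc: "wl \<le> wc" "u wc = cs"
    and kap: "\<kappa> > 0" "\<forall>t\<in>{wl..wc+1}. u'' t \<le> -\<kappa>"
    and K: "K > 0"
    and tail: "(u (wc+1) - u wl) * measure Pa {x\<in>space Pa. K \<le> Lam x} \<le> (cs - ca)/2"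
  shows "expect_lb P0 w wl \<ge> ereal (wc + min 1 (\<kappa> * (cs - ca)^2 / (8 * u' wc * (u' wl)^2 * K)))"
proof -
  interpret P0: prob_space P0 by fact
  interpret PA: prob_space Pa by fact
  define \<Delta> where "\<Delta> = cs - ca"
  have \<Delta>pos: "\<Delta> > 0" using Dpos by (simp add: \<Delta>_def)
  define gv where "gv = wc + min 1 (\<kappa> * \<Delta>^2 / (8 * u' wc * (u' wl)^2 * K))"
  have spa: "space Pa = space P0" "sets Pa = sets P0" using Pa(1) by auto
  have vm[measurable]: "(\<lambda>x. u (w x)) \<in> borel_measurable P0" by (rule meas_uw[OF wm wge])
  have uw_eq: "u \<circ> w = (\<lambda>x. u (w x))" by auto
  show ?thesis unfolding \<Delta>_def[symmetric] gv_def[symmetric]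
  proof (cases "expect_lb P0 w wl = \<infinity>")
    case True thus "ereal gv \<le> expect_lb P0 w wl" by simp
  next
    case False
    have wint: "integrable P0 w" by (rule expect_lb_fin[OF P0 wm wge False])
    define W where "W = integral\<^sup>L P0 w"
    have EW: "expect_lb P0 w wl = ereal W" unfolding W_def by (rule expect_lb_int[OF P0 wm wge wint])
    have Wwl: "wl \<le> W" unfolding W_def using wge by (intro P0.integral_ge_const wint) (auto intro!: AE_I2)
    show "ereal gv \<le> expect_lb P0 w wl"
    proof (cases "wc + 1 \<le> W")
      case True
      thus ?thesis unfolding EW gv_def by simp
    next
      case False
      hence WB: "W < wc + 1" by simp
      have a0: "u' wl > 0" using upos by simp
      define v where "v x = u (w x)" for x
      have vm'[measurable]: "v \<in> borel_measurable P0" using vm unfolding v_def .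
      have vlo: "u wl \<le> v x" if "x \<in> space P0" for x
        using u_mono[of wl "w x"] wge that by (simp add: v_def)
      have vhi: "v x \<le> u wl + u' wl * (w x - wl)" if "x \<in> space P0" for x
        using lipschitz[of wl "w x"] wge that by (simp add: v_def)
      have vint: "integrable P0 v"
      proof (rule Bochner_Integration.integrable_bound[of _ "\<lambda>x. \<bar>u wl\<bar> + u' wl * (w x - wl)"])
        show "integrable P0 (\<lambda>x. \<bar>u wl\<bar> + u' wl * (w x - wl))" using wint by auto
        show "AE x in P0. norm (v x) \<le> norm (\<bar>u wl\<bar> + u' wl * (w x - wl))"
        proof (rule AE_I2)
          fix x assume x: "x \<in> space P0"
          have "0 \<le> u' wl * (w x - wl)" using a0 wge x by auto
          thus "norm (v x) \<le> norm (\<bar>u wl\<bar> + u' wl * (w x - wl))"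
            using vlo[OF x] vhi[OF x] by auto
        qed
      qed simp
      have EV: "expect_lb P0 (u \<circ> w) (u wl) = ereal (integral\<^sup>L P0 v)"
        unfolding uw_eq v_def[symmetric] using vlo by (intro expect_lb_int[OF P0 vm' _ vint]) auto
      have IR': "cs \<le> integral\<^sup>L P0 v" using IR unfolding EV by simp
      \<comment> \<open>strong concavity\<close>
      define Y where "Y x = max 0 (W - w x)" for x
      have Ym[measurable]: "Y \<in> borel_measurable P0" unfolding Y_def by measurable
      have Ybd: "0 \<le> Y x \<and> Y x \<le> W - wl" if "x \<in> space P0" for x
        using wge that Wwl by (auto simp: Y_def)
      have Y2int: "integrable P0 (\<lambda>x. (Y x)^2)"
      proof (rule Bochner_Integration.integrable_bound[of _ "\<lambda>x. (W - wl)^2"])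
        show "AE x in P0. norm ((Y x)^2) \<le> norm ((W - wl)^2)"
          using Ybd by (intro AE_I2) (auto intro!: power_mono)
      qed simp_all
      define Q where "Q = (\<integral>x. (Y x)^2 \<partial>P0)"
      have Qnn: "0 \<le> Q" unfolding Q_def by (intro integral_nonneg_AE) auto
      have kapW: "\<forall>t\<in>{wl..W}. u'' t \<le> -\<kappa>" using kap WB by auto
      have pw: "v x + \<kappa>/2 * (Y x)^2 \<le> u W + u' W * (w x - W)" if x: "x \<in> space P0" for x
      proof (cases "w x \<le> W")
        case True
        have "u (w x) \<le> u W + u' W * (w x - W) - \<kappa> / 2 * (W - w x)^2"
          by (rule strong[OF _ True kap(1) kapW]) (use wge x in auto)
        thus ?thesis using True by (simp add: v_def Y_def)
      next
        case False
        have "u (w x) \<le> u W + u' W * (w x - W)" by (rule tangent) (use wge x Wwl in auto)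
        thus ?thesis using False by (simp add: v_def Y_def)
      qed
      have i1: "integrable P0 (\<lambda>x. v x + \<kappa>/2 * (Y x)^2)"
        by (intro Bochner_Integration.integrable_add integrable_mult_right vint Y2int)
      have i2: "integrable P0 (\<lambda>x. u W + u' W * (w x - W))"
        by (intro Bochner_Integration.integrable_add integrable_mult_right Bochner_Integration.integrable_diff wint P0.integrable_const)
      have e1a: "(\<integral>x. v x + \<kappa>/2 * (Y x)^2 \<partial>P0) = integral\<^sup>L P0 v + (\<integral>x. \<kappa>/2 * (Y x)^2 \<partial>P0)"
        by (rule Bochner_Integration.integral_add[OF vint integrable_mult_right[OF Y2int]])
      have e1b: "(\<integral>x. \<kappa>/2 * (Y x)^2 \<partial>P0) = \<kappa>/2 * Q" unfolding Q_def by (rule integral_mult_right_zero)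
      have "integral\<^sup>L P0 v + \<kappa>/2 * Q = (\<integral>x. v x + \<kappa>/2 * (Y x)^2 \<partial>P0)"
        unfolding e1a e1b ..
      also have "\<dots> \<le> (\<integral>x. u W + u' W * (w x - W) \<partial>P0)"
        by (rule integral_mono[OF i1 i2]) (rule pw)
      also have "\<dots> = u W + u' W * ((\<integral>x. w x \<partial>P0) - W)"
      proof -
        have id: "integrable P0 (\<lambda>x. w x - W)" by (intro Bochner_Integration.integrable_diff wint P0.integrable_const)
        have "(\<integral>x. u W + u' W * (w x - W) \<partial>P0) = (\<integral>x. u W \<partial>P0) + (\<integral>x. u' W * (w x - W) \<partial>P0)"
          by (rule Bochner_Integration.integral_add[OF P0.integrable_const integrable_mult_right[OF id]])
        also have "(\<integral>x. u W \<partial>P0) = u W" by (simp add: P0.prob_space)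
        also have "(\<integral>x. u' W * (w x - W) \<partial>P0) = u' W * (\<integral>x. w x - W \<partial>P0)" by (rule integral_mult_right_zero)
        also have "(\<integral>x. w x - W \<partial>P0) = (\<integral>x. w x \<partial>P0) - (\<integral>x. W \<partial>P0)"
          by (rule Bochner_Integration.integral_diff[OF wint P0.integrable_const])
        also have "(\<integral>x. W \<partial>P0) = W" by (simp add: P0.prob_space)
        finally show ?thesis .
      qed
      also have "\<dots> = u W" by (simp add: W_def)
      finally have conc: "integral\<^sup>L P0 v + \<kappa>/2 * Q \<le> u W" .
      define m where "m = u W"
      have ICa: "expect_lb Pa (u \<circ> w) (u wl) \<le> ereal (integral\<^sup>L P0 v - \<Delta>)"
        using IC unfolding EV \<Delta>_def
        by (cases "expect_lb Pa (u \<circ> w) (u wl)") auto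
      have vmA[measurable]: "v \<in> borel_measurable Pa" using vm' by (simp add: measurable_cong_sets[OF spa(2) refl])
      have vloA: "\<forall>x\<in>space Pa. u wl \<le> v x" using vlo spa by auto
      have uwv: "u \<circ> w = v" by (auto simp: v_def)
      have finA: "expect_lb Pa v (u wl) \<noteq> \<infinity>" using ICa unfolding uwv by auto
      have vintA: "integrable Pa v" by (rule expect_lb_fin[OF Pa(2) vmA vloA finA])
      have EVA: "expect_lb Pa v (u wl) = ereal (integral\<^sup>L Pa v)"
        by (rule expect_lb_int[OF Pa(2) vmA vloA vintA])
      have IA: "integral\<^sup>L Pa v \<le> integral\<^sup>L P0 v - \<Delta>"
        using ICa EVA unfolding uwv by simp
      define D where "D x = max 0 (m - v x)" for x
      have Dm[measurable]: "D \<in> borel_measurable P0" unfolding D_def by measurable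
      have DmA: "D \<in> borel_measurable Pa" using Dm by (simp add: measurable_cong_sets[OF spa(2) refl])
      define M0 where "M0 = u (wc+1) - u wl"
      have mB: "m \<le> u (wc + 1)" unfolding m_def using u_mono[of W "wc+1"] WB Wwl by auto
      have Dbd: "0 \<le> D x \<and> D x \<le> M0" if "x \<in> space P0" for x
        using vlo[OF that] mB u_mono[of wl "wc+1"] wc by (auto simp: D_def M0_def)
      have Dlip: "D x \<le> u' wl * Y x" if x: "x \<in> space P0" for x
      proof (cases "w x \<le> W")
        case True
        have "u W - u (w x) \<le> u' wl * (W - w x)" by (rule lipschitz) (use wge x True in auto)
        thus ?thesis using True a0 by (auto simp: D_def Y_def v_def m_def)
      next
        case False
        hence "u (w x) \<ge> u W" using u_mono[of W "w x"] Wwl by auto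
        thus ?thesis using False a0 by (auto simp: D_def Y_def v_def m_def)
      qed
      have DintA: "integrable Pa D"
      proof (rule Bochner_Integration.integrable_bound[of _ "\<lambda>x. M0"])
        show "AE x in Pa. norm (D x) \<le> norm M0"
        proof (rule AE_I2)
          fix x assume "x \<in> space Pa"
          hence "0 \<le> D x" "D x \<le> M0" using Dbd spa by auto
          thus "norm (D x) \<le> norm M0" by simp
        qed
      qed (simp_all add: DmA)
      have "(\<integral>x. m - v x \<partial>Pa) \<le> integral\<^sup>L Pa D"
        using vintA DintA by (intro integral_mono) (auto simp: D_def)
      hence "m - integral\<^sup>L Pa v \<le> integral\<^sup>L Pa D" using vintA by (simp add: PA.prob_space)
      moreover have "0 \<le> \<kappa> * Q / 2" using Qnn kap(1) by simp
      ultimately have DA: "\<Delta> \<le> integral\<^sup>L Pa D" using IA conc by (simp add: m_def)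
      \<comment> \<open>change of measure\<close>
      have Lint: "integrable P0 Lam"
      proof -
        have "(\<integral>\<^sup>+x. ennreal (Lam x) \<partial>P0) = emeasure Pa (space Pa)"
          using Pa(1) by (simp add: emeasure_density)
        hence "(\<integral>\<^sup>+x. ennreal (Lam x) \<partial>P0) < \<infinity>" by (simp add: PA.emeasure_space_1)
        thus ?thesis using Lnn by (intro integrableI_nonneg) auto
      qed
      have L1: "integral\<^sup>L P0 Lam = 1"
      proof -
        have "(\<integral>\<^sup>+x. ennreal (Lam x) \<partial>P0) = ennreal (integral\<^sup>L P0 Lam)"
          using Lnn by (intro nn_integral_eq_integral Lint) auto
        moreover have "(\<integral>\<^sup>+x. ennreal (Lam x) \<partial>P0) = 1"
          using Pa(1) PA.emeasure_space_1 by (simp add: emeasure_density)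
        moreover have "integral\<^sup>L P0 Lam \<ge> 0" using Lnn by (intro integral_nonneg_AE) auto
        ultimately show ?thesis by simp
      qed
      have DA': "integral\<^sup>L Pa D = (\<integral>x. Lam x * D x \<partial>P0)"
        unfolding Pa(1) using Lnn by (subst integral_density) auto
      define Gc where "Gc = {x\<in>space P0. K \<le> Lam x}"
      have Gcs[measurable]: "Gc \<in> sets P0" unfolding Gc_def by measurable
      have GcA: "measure Pa Gc = (\<integral>x. Lam x * indicator Gc x \<partial>P0)"
      proof -
        have "measure Pa Gc = integral\<^sup>L Pa (indicator Gc)" using spa Gcs by simp
        also have "\<dots> = (\<integral>x. Lam x * indicator Gc x \<partial>P0)"
          unfolding Pa(1) using Lnn by (subst integral_density) auto
        finally show ?thesis .
      qed
      define t where "t = 2 * u' wl * K / \<Delta>"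
      have tpos: "t > 0" unfolding t_def using a0 K \<Delta>pos by auto
      have pw2: "Lam x * D x \<le> u' wl * (t/2 * (Y x)^2 + K/(2*t) * Lam x) + M0 * (Lam x * indicator Gc x)"
        if x: "x \<in> space P0" for x
      proof (cases "K \<le> Lam x")
        case True
        have "Lam x * D x \<le> Lam x * M0" using Dbd[OF x] Lnn by (intro mult_left_mono) auto
        moreover have "0 \<le> u' wl * (t/2 * (Y x)^2 + K/(2*t) * Lam x)"
          using a0 tpos K Lnn by (intro mult_nonneg_nonneg add_nonneg_nonneg) auto
        ultimately show ?thesis using True x by (simp add: Gc_def indicator_def mult.commute)
      next
        case False
        have amgm: "Y x * Lam x \<le> t/2 * (Y x)^2 + (Lam x)^2/(2*t)"
        proof -
          have "0 \<le> (t * Y x - Lam x)^2" by simp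
          hence "2 * t * (Y x * Lam x) \<le> t^2 * (Y x)^2 + (Lam x)^2" by (simp add: power2_eq_square algebra_simps)
          thus ?thesis using tpos by (simp add: field_simps power2_eq_square)
        qed
        have "(Lam x)^2/(2*t) \<le> K/(2*t) * Lam x"
          using False Lnn tpos by (simp add: power2_eq_square divide_right_mono mult_right_mono field_simps)
        hence yl: "Y x * Lam x \<le> t/2 * (Y x)^2 + K/(2*t) * Lam x" using amgm by linarith
        have "Lam x * D x \<le> Lam x * (u' wl * Y x)" using Dlip[OF x] Lnn by (intro mult_left_mono) auto
        also have "\<dots> = u' wl * (Y x * Lam x)" by simp
        also have "\<dots> \<le> u' wl * (t/2 * (Y x)^2 + K/(2*t) * Lam x)" using yl a0 by (intro mult_left_mono) auto
        finally show ?thesis using False x by (simp add: Gc_def indicator_def)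
      qed
      have LDint: "integrable P0 (\<lambda>x. Lam x * D x)"
        using DintA unfolding Pa(1) using Lnn by (subst (asm) integrable_density) auto
      have LGint: "integrable P0 (\<lambda>x. Lam x * indicator Gc x)"
        using integrable_mult_indicator[OF Gcs Lint] by (simp add: mult.commute)
      have "(\<integral>x. Lam x * D x \<partial>P0) \<le> (\<integral>x. u' wl * (t/2 * (Y x)^2 + K/(2*t) * Lam x) + M0 * (Lam x * indicator Gc x) \<partial>P0)"
        using pw2 LDint Y2int Lint LGint by (intro integral_mono) auto
      also have "\<dots> = u' wl * (t/2 * Q + K/(2*t) * 1) + M0 * measure Pa Gc"
        using Y2int Lint LGint by (simp add: GcA Q_def L1)
      finally have key: "\<Delta> \<le> u' wl * (t/2 * Q + K/(2*t)) + M0 * measure Pa Gc"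
        using DA DA' by simp
      have "M0 * measure Pa Gc \<le> \<Delta>/2" using tail unfolding M0_def \<Delta>_def Gc_def spa by simp
      hence key2: "\<Delta>/2 \<le> u' wl * (t/2 * Q + K/(2*t))" using key by linarith
      have "u' wl * (K/(2*t)) = \<Delta>/4" unfolding t_def using a0 K \<Delta>pos by (simp add: field_simps)
      hence "\<Delta>/4 \<le> u' wl * (t/2 * Q)" using key2 by (simp add: algebra_simps)
      also have "\<dots> = (u' wl)^2 * K * Q / \<Delta>" unfolding t_def using \<Delta>pos by (simp add: field_simps power2_eq_square)
      finally have "\<Delta>/4 \<le> (u' wl)^2 * K * Q / \<Delta>" .
      hence Qlb: "\<Delta>^2 / (4 * (u' wl)^2 * K) \<le> Q" using \<Delta>pos a0 K by (simp add: field_simps power2_eq_square)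
      have tanc: "u W \<le> u wc + u' wc * (W - wc)" by (rule tangent) (use wc Wwl in auto)
      have awc: "u' wc > 0" using upos wc by auto
      have "\<kappa>/2 * Q \<le> u' wc * (W - wc)" using tanc conc IR' wc by (simp add: m_def)
      hence "\<kappa>/2 * (\<Delta>^2 / (4 * (u' wl)^2 * K)) \<le> u' wc * (W - wc)"
        using Qlb kap(1) by (smt (verit) mult_left_mono half_gt_zero)
      hence "\<kappa> * \<Delta>^2 / (8 * u' wc * (u' wl)^2 * K) \<le> W - wc"
        using awc a0 K by (simp add: field_simps)
      hence "gv \<le> W" unfolding gv_def by linarith
      thus ?thesis unfolding EW by simp
    qed
  qed
qed

end

lemma sq_le_exp_abs: "(y::real)^2 \<le> 2 * exp \<bar>y\<bar>"
proof -
  have "1 + \<bar>y\<bar> + \<bar>y\<bar>^2/2 \<le> exp \<bar>y\<bar>" by (rule exp_lower_Taylor_quadratic) simp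
  moreover have "\<bar>y\<bar>^2 = y^2" by simp
  moreover have "0 \<le> \<bar>y\<bar>" by simp
  ultimately have "y^2 / 2 \<le> exp \<bar>y\<bar>" by linarith
  thus ?thesis by simp
qed

lemma mgf_pointwise:
  fixes l g :: real
  assumes "0 < l" "l \<le> 1"
  shows "exp (l * g) \<le> 1 + l * g + l^2 * (2 * (exp (2*g) + exp (-2*g)))"
proof -
  have "exp (l*g) \<le> 1 + l*g + (l*g)^2 * exp \<bar>l*g\<bar>" by (rule exp_le_quad)
  also have "(l*g)^2 * exp \<bar>l*g\<bar> \<le> l^2 * (2 * (exp (2*g) + exp (-2*g)))"
  proof -
    have e1: "exp \<bar>l*g\<bar> \<le> exp \<bar>g\<bar>" using assms by (simp add: abs_mult mult_left_le_one_le)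
    have "g^2 * exp \<bar>l*g\<bar> \<le> (2 * exp \<bar>g\<bar>) * exp \<bar>g\<bar>"
      by (intro mult_mono sq_le_exp_abs e1) auto
    also have "\<dots> = 2 * exp (2 * \<bar>g\<bar>)" by (simp add: exp_add[symmetric])
    also have "exp (2 * \<bar>g\<bar>) \<le> exp (2*g) + exp (-2*g)" by (cases "g \<ge> 0") auto
    finally have "g^2 * exp \<bar>l*g\<bar> \<le> 2 * (exp (2*g) + exp (-2*g))" by simp
    hence "l^2 * (g^2 * exp \<bar>l*g\<bar>) \<le> l^2 * (2 * (exp (2*g) + exp (-2*g)))"
      by (intro mult_left_mono) auto
    thus ?thesis by (simp add: power_mult_distrib mult.assoc)
  qed
  finally show ?thesis by simp
qed

lemma mgf_bound:
  fixes g :: "'b \<Rightarrow> real"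
  assumes P: "prob_space M" and gm[measurable]: "g \<in> borel_measurable M"
    and ex: "\<And>s. integrable M (\<lambda>x. exp (s * g x))" and dp: "\<delta> > 0"
  shows "\<exists>l>0. l \<le> 1 \<and> (\<integral>x. exp (l * g x) \<partial>M) \<le> exp (l * ((\<integral>x. g x \<partial>M) + \<delta>))"
proof -
  interpret prob_space M by fact
  define A where "A = (\<integral>x. exp (2 * g x) + exp (-2 * g x) \<partial>M)"
  have iA: "integrable M (\<lambda>x. exp (2 * g x) + exp (-2 * g x))"
    using ex[of 2] ex[of "-2"] by auto
  have A0: "0 \<le> A" unfolding A_def by (intro integral_nonneg_AE) auto
  have ig: "integrable M g"
  proof (rule Bochner_Integration.integrable_bound[of _ "\<lambda>x. exp (1 * g x) + exp ((-1) * g x)"])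
    show "integrable M (\<lambda>x. exp (1 * g x) + exp ((-1) * g x))" using ex[of 1] ex[of "-1"] by auto
    show "AE x in M. norm (g x) \<le> norm (exp (1 * g x) + exp ((-1) * g x))"
    proof (rule AE_I2)
      fix x
      have "\<bar>g x\<bar> \<le> exp \<bar>g x\<bar>" using exp_ge_add_one_self[of "\<bar>g x\<bar>"] by linarith
      also have "\<dots> \<le> exp (g x) + exp (- g x)" by (cases "g x \<ge> 0") auto
      finally show "norm (g x) \<le> norm (exp (1 * g x) + exp ((-1) * g x))" by simp
    qed
  qed simp
  define l where "l = min 1 (\<delta> / (2 * A + 1))"
  have l0: "0 < l" "l \<le> 1" unfolding l_def using dp A0 by auto
  have lA: "2 * l * A \<le> \<delta>"
  proof -
    have "l \<le> \<delta> / (2 * A + 1)" unfolding l_def by simp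
    hence "l * (2 * A + 1) \<le> \<delta>" using A0 by (simp add: field_simps)
    thus ?thesis using l0 by (simp add: algebra_simps)
  qed
  have "(\<integral>x. exp (l * g x) \<partial>M) \<le> (\<integral>x. 1 + l * g x + l^2 * (2 * (exp (2 * g x) + exp (-2 * g x))) \<partial>M)"
  proof (rule integral_mono)
    show "integrable M (\<lambda>x. 1 + l * g x + l^2 * (2 * (exp (2 * g x) + exp (-2 * g x))))"
      by (intro Bochner_Integration.integrable_add integrable_mult_right ig iA integrable_const)
  qed (use ex[of l] mgf_pointwise[OF l0] in auto)
  also have "\<dots> = 1 + l * (\<integral>x. g x \<partial>M) + l^2 * (2 * A)"
  proof -
    define h where "h x = exp (2 * g x) + exp (-2 * g x)" for x
    have ih: "integrable M h" using iA unfolding h_def .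
    have i1: "integrable M (\<lambda>x. 1 + l * g x)" by (intro Bochner_Integration.integrable_add integrable_mult_right ig integrable_const)
    have i2: "integrable M (\<lambda>x. l^2 * (2 * h x))" by (intro integrable_mult_right ih)
    have "(\<integral>x. 1 + l * g x + l^2 * (2 * h x) \<partial>M) = (\<integral>x. 1 + l * g x \<partial>M) + (\<integral>x. l^2 * (2 * h x) \<partial>M)"
      by (rule Bochner_Integration.integral_add[OF i1 i2])
    also have "(\<integral>x. 1 + l * g x \<partial>M) = 1 + l * (\<integral>x. g x \<partial>M)"
      using ig by (simp add: prob_space)
    also have "(\<integral>x. l^2 * (2 * h x) \<partial>M) = l^2 * (2 * A)"
      unfolding A_def h_def[symmetric] by (simp only: integral_mult_right_zero)
    finally show ?thesis unfolding h_def .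
  qed
  also have "\<dots> \<le> 1 + l * ((\<integral>x. g x \<partial>M) + \<delta>)"
  proof -
    have "l^2 * (2 * A) = l * (2 * l * A)" by (simp add: power2_eq_square)
    also have "\<dots> \<le> l * \<delta>" using lA l0 by (intro mult_left_mono) auto
    finally show ?thesis by (simp add: algebra_simps)
  qed
  also have "\<dots> \<le> exp (l * ((\<integral>x. g x \<partial>M) + \<delta>))" by (rule exp_ge_add_one_self)
  finally show ?thesis using l0 by blast
qed

lemma chernoff_sum:
  fixes g :: "'b \<Rightarrow> real"
  assumes P: "prob_space M" and gm[measurable]: "g \<in> borel_measurable M" and l: "l > 0"
    and ie: "integrable M (\<lambda>x. exp (l * g x))"
    and mg: "(\<integral>x. exp (l * g x) \<partial>M) \<le> exp (l * (m + \<delta>))"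
  shows "measure (PiM {..<n} (\<lambda>_. M)) {x\<in>space (PiM {..<n} (\<lambda>_. M)). real n * (m + 2*\<delta>) \<le> (\<Sum>i<n. g (x i))}
           \<le> exp (- l * real n * \<delta>)"
proof -
  interpret prob_space M by fact
  interpret PP: prob_space "PiM {..<n} (\<lambda>_. M)" by (intro prob_space_PiM) (auto simp: prob_space_axioms)
  define f where "f y = ennreal (exp (l * g y))" for y
  have fm: "f \<in> borel_measurable M" unfolding f_def by measurable
  define T where "T = exp (l * real n * (m + 2*\<delta>))"
  define S where "S = {x\<in>space (PiM {..<n} (\<lambda>_. M)). real n * (m + 2*\<delta>) \<le> (\<Sum>i<n. g (x i))}"
  have S': "S = {x\<in>space (PiM {..<n} (\<lambda>_. M)). ennreal T \<le> (\<Prod>i\<in>{..<n}. f (x i))}"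
  proof -
    have "(\<Prod>i\<in>{..<n}. f (x i)) = ennreal (exp (l * (\<Sum>i<n. g (x i))))" for x
      unfolding f_def by (simp add: prod_ennreal exp_sum sum_distrib_left)
    moreover have "(ennreal T \<le> ennreal (exp (l * (\<Sum>i<n. g (x i))))) \<longleftrightarrow> real n * (m + 2*\<delta>) \<le> (\<Sum>i<n. g (x i))" for x
      unfolding T_def using l by (simp add: ennreal_le_iff mult.assoc)
    ultimately show ?thesis unfolding S_def by simp
  qed
  have "ennreal T * emeasure (PiM {..<n} (\<lambda>_. M)) S \<le> (integral\<^sup>N M f) ^ card {..<n}"
    unfolding S' by (rule PiM_Markov[OF P fm]) simp
  also have "integral\<^sup>N M f = ennreal (\<integral>x. exp (l * g x) \<partial>M)"
    unfolding f_def by (intro nn_integral_eq_integral ie) auto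
  also have "\<dots> ^ card {..<n} \<le> ennreal (exp (l * (m + \<delta>))) ^ n"
    using mg by (simp add: ennreal_leI power_mono)
  finally have "ennreal T * ennreal (measure (PiM {..<n} (\<lambda>_. M)) S) \<le> ennreal (exp (l * (m + \<delta>)) ^ n)"
    by (simp add: PP.emeasure_eq_measure ennreal_power)
  hence "T * measure (PiM {..<n} (\<lambda>_. M)) S \<le> exp (l * (m + \<delta>)) ^ n"
    unfolding T_def by (simp add: ennreal_mult''[symmetric] ennreal_le_iff)
  hence "measure (PiM {..<n} (\<lambda>_. M)) S \<le> exp (l * (m + \<delta>)) ^ n / T"
    unfolding T_def by (simp add: field_simps)
  also have "exp (l * (m + \<delta>)) ^ n / T = exp (- l * real n * \<delta>)"
    unfolding T_def by (simp add: exp_of_nat_mult[symmetric] exp_diff[symmetric] algebra_simps)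
  finally show ?thesis unfolding S_def .
qed

locale mtech =
  fixes X :: "'x::euclidean_space set" and \<mu> :: "'a \<Rightarrow> 'x measure" and ast :: 'a
  assumes mt: "monitoring_tech X \<mu>"
begin

definition Lf :: "'a \<Rightarrow> 'x \<Rightarrow> real" where
  "Lf a = (SOME L. L \<in> borel_measurable (\<mu> ast) \<and> (\<forall>x. 0 < L x) \<and>
           \<mu> a = density (\<mu> ast) (\<lambda>x. ennreal (L x)) \<and>
           (AE x in \<mu> ast. ennreal (L x) = RN_deriv (\<mu> ast) (\<mu> a) x))"

lemma Lf_props: "Lf a \<in> borel_measurable (\<mu> ast) \<and> (\<forall>x. 0 < Lf a x) \<and>
           \<mu> a = density (\<mu> ast) (\<lambda>x. ennreal (Lf a x)) \<and>
           (AE x in \<mu> ast. ennreal (Lf a x) = RN_deriv (\<mu> ast) (\<mu> a) x)"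
  unfolding Lf_def by (rule someI_ex[OF mt_density[OF mt]])

lemma prob: "prob_space (\<mu> a)" by (rule mt_prob[OF mt])
lemma sets_eq: "sets (\<mu> a) = sets (\<mu> b)" by (rule mt_sets[OF mt])
lemma Lf_meas0: "Lf a \<in> borel_measurable (\<mu> ast)" using Lf_props[of a] by (elim conjE)
lemma Lf_meas[measurable]: "Lf a \<in> borel_measurable (\<mu> b)"
  unfolding measurable_cong_sets[OF sets_eq[of b ast] refl, of borel] by (rule Lf_meas0)
lemma Lf_pos: "0 < Lf a x" using Lf_props[of a] by (elim conjE) blast
lemma Lf_dens: "\<mu> a = density (\<mu> ast) (\<lambda>x. ennreal (Lf a x))" using Lf_props[of a] by (elim conjE)
lemma Lf_RN: "AE x in \<mu> ast. ennreal (Lf a x) = RN_deriv (\<mu> ast) (\<mu> a) x" using Lf_props[of a] by (elim conjE)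

lemma ac: "absolutely_continuous (\<mu> a) (\<mu> b)" by (rule mt_ac[OF mt])

lemma KL_eq: "KL_divergence (exp 1) (\<mu> ast) (\<mu> a) = (\<integral>x. ln (Lf a x) \<partial>\<mu> a)"
proof -
  have ae: "AE x in \<mu> a. ennreal (Lf a x) = RN_deriv (\<mu> ast) (\<mu> a) x"
    by (rule absolutely_continuous_AE[OF sets_eq ac Lf_RN])
  show ?thesis unfolding KL_divergence_def entropy_density_def
  proof (rule integral_cong_AE)
    show "AE x in \<mu> a. (log (exp 1) \<circ> enn2real \<circ> RN_deriv (\<mu> ast) (\<mu> a)) x = ln (Lf a x)"
      using ae proof eventually_elim
      case (elim x)
      hence "enn2real (RN_deriv (\<mu> ast) (\<mu> a) x) = Lf a x"
        using Lf_pos[of a x] by (metis enn2real_ennreal less_imp_le)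
      thus ?case by (simp add: log_def)
    qed
  qed (auto simp: measurable_cong_sets[OF sets_eq[of a ast] refl])
qed

lemma ast_dens: "\<mu> ast = density (\<mu> a) (\<lambda>x. ennreal (1 / Lf a x))"
proof -
  have "density (\<mu> a) (\<lambda>x. ennreal (1 / Lf a x))
      = density (\<mu> ast) (\<lambda>x. ennreal (Lf a x) * ennreal (1 / Lf a x))"
    by (subst (1) Lf_dens[of a], subst density_density_eq) auto
  also have "\<dots> = density (\<mu> ast) (\<lambda>x. 1)"
  proof -
    have "ennreal (Lf a x) * ennreal (1 / Lf a x) = 1" for x
      using Lf_pos[of a x] by (simp add: ennreal_mult''[symmetric])
    thus ?thesis by simp
  qed
  also have "\<dots> = \<mu> ast" by (rule density_1)
  finally show ?thesis by simp
qed

lemma moments: "integrable (\<mu> a) (\<lambda>x. exp (s * ln (Lf a x)))"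
proof -
  interpret pa: prob_space "\<mu> a" by (rule prob)
  interpret p0: prob_space "\<mu> ast" by (rule prob)
  have mom: "\<And>b b' p. p > 0 \<Longrightarrow>
     (\<integral>\<^sup>+ x. ennreal (enn2real (RN_deriv (\<mu> b) (\<mu> b') x) powr p) \<partial>\<mu> b) < \<infinity>"
    using mt unfolding monitoring_tech_def by blast
  have eqp: "exp (s * ln (Lf a x)) = Lf a x powr s" for x
    using Lf_pos[of a x] by (simp add: powr_def)
  have fin: "(\<integral>\<^sup>+x. ennreal (Lf a x powr s) \<partial>\<mu> a) < \<infinity>"
  proof (cases "s \<ge> 0")
    case True
    have "(\<integral>\<^sup>+x. ennreal (Lf a x powr s) \<partial>\<mu> a)
        = (\<integral>\<^sup>+x. ennreal (Lf a x) * ennreal (Lf a x powr s) \<partial>\<mu> ast)"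
      by (subst (1) Lf_dens[of a]) (simp add: nn_integral_density)
    also have "\<dots> = (\<integral>\<^sup>+x. ennreal (enn2real (RN_deriv (\<mu> ast) (\<mu> a) x) powr (s + 1)) \<partial>\<mu> ast)"
    proof (rule nn_integral_cong_AE)
      show "AE x in \<mu> ast. ennreal (Lf a x) * ennreal (Lf a x powr s)
             = ennreal (enn2real (RN_deriv (\<mu> ast) (\<mu> a) x) powr (s + 1))"
        using Lf_RN[of a] proof eventually_elim
        case (elim x)
        hence "enn2real (RN_deriv (\<mu> ast) (\<mu> a) x) = Lf a x"
          using Lf_pos[of a x] by (metis enn2real_ennreal less_imp_le)
        thus ?case using Lf_pos[of a x]
          by (simp add: ennreal_mult''[symmetric] powr_add)
      qed
    qed
    also have "\<dots> < \<infinity>" using mom[of "s+1" ast a] True by simp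
    finally show ?thesis .
  next
    case False
    have ae: "AE x in \<mu> a. ennreal (1 / Lf a x) = RN_deriv (\<mu> a) (\<mu> ast) x"
      by (rule pa.RN_deriv_unique) (auto simp: ast_dens[of a, symmetric])
    have "(\<integral>\<^sup>+x. ennreal (Lf a x powr s) \<partial>\<mu> a)
        = (\<integral>\<^sup>+x. ennreal (enn2real (RN_deriv (\<mu> a) (\<mu> ast) x) powr (- s)) \<partial>\<mu> a)"
    proof (rule nn_integral_cong_AE)
      show "AE x in \<mu> a. ennreal (Lf a x powr s)
             = ennreal (enn2real (RN_deriv (\<mu> a) (\<mu> ast) x) powr (- s))"
        using ae proof eventually_elim
        case (elim x)
        hence "enn2real (RN_deriv (\<mu> a) (\<mu> ast) x) = 1 / Lf a x"
          using Lf_pos[of a x] by (metis enn2real_ennreal less_imp_le zero_le_divide_1_iff)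
        thus ?case using Lf_pos[of a x]
          by (simp add: powr_def ln_div)
      qed
    qed
    also have "\<dots> < \<infinity>" using mom[of "-s" a ast] False by simp
    finally show ?thesis .
  qed
  show ?thesis unfolding eqp
    using fin by (intro integrableI_nonneg) auto
qed

lemma sig_prob: "prob_space (sig \<mu> a n)"
  unfolding sig_def by (intro prob_space_PiM prob)

lemma sig_space: "space (sig \<mu> a n) = space (sig \<mu> b n)"
  unfolding sig_def by (simp add: space_PiM mt_space[OF mt])

lemma sig_sets: "sets (sig \<mu> a n) = sets (sig \<mu> b n)"
  unfolding sig_def by (intro sets_PiM_cong refl sets_eq)

lemma sig_dens: "sig \<mu> a n = density (sig \<mu> ast n) (\<lambda>x. ennreal (\<Prod>i<n. Lf a (x i)))"
proof -
  have "sig \<mu> a n = PiM {..<n} (\<lambda>_. density (\<mu> ast) (\<lambda>x. ennreal (Lf a x)))"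
    unfolding sig_def by (subst Lf_dens[of a]) simp
  also have "\<dots> = density (PiM {..<n} (\<lambda>_. \<mu> ast)) (\<lambda>x. \<Prod>i\<in>{..<n}. ennreal (Lf a (x i)))"
  proof (rule PiM_density_eq)
    show "sigma_finite_measure (density (\<mu> ast) (\<lambda>x. ennreal (Lf a x)))"
      using Lf_dens[of a] prob[of a] by (simp add: prob_space_imp_sigma_finite)
    show "sigma_finite_measure (\<mu> ast)" using prob[of ast] by (simp add: prob_space_imp_sigma_finite)
  qed auto
  also have "\<dots> = density (sig \<mu> ast n) (\<lambda>x. ennreal (\<Prod>i<n. Lf a (x i)))"
    unfolding sig_def using Lf_pos[of a] by (simp add: prod_ennreal less_imp_le)
  finally show ?thesis .
qed

end

context mtech begin

definition KLa :: "'a \<Rightarrow> real" where "KLa a = (\<integral>x. ln (Lf a x) \<partial>\<mu> a)"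

lemma prod_exp_ln: "(\<Prod>i<(n::nat). Lf a (x i)) = exp (\<Sum>i<n. ln (Lf a (x i)))"
proof -
  have "exp (\<Sum>i<n. ln (Lf a (x i))) = (\<Prod>i<n. exp (ln (Lf a (x i))))" by (rule exp_sum) simp
  also have "\<dots> = (\<Prod>i<n. Lf a (x i))" using Lf_pos by simp
  finally show ?thesis by simp
qed

lemma tail_hi:
  assumes dp: "\<delta> > 0"
  shows "\<exists>l>0. \<forall>n. measure (sig \<mu> a n) {x\<in>space (sig \<mu> a n). exp (real n * (KLa a + 2*\<delta>)) \<le> (\<Prod>i<n. Lf a (x i))}
            \<le> exp (- l * real n * \<delta>)"
proof -
  have gm: "(\<lambda>x. ln (Lf a x)) \<in> borel_measurable (\<mu> a)" by measurable
  obtain l where l: "l > 0" "l \<le> 1" "(\<integral>x. exp (l * ln (Lf a x)) \<partial>\<mu> a) \<le> exp (l * (KLa a + \<delta>))"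
    using mgf_bound[OF prob gm moments dp] unfolding KLa_def by blast
  have "measure (sig \<mu> a n) {x\<in>space (sig \<mu> a n). exp (real n * (KLa a + 2*\<delta>)) \<le> (\<Prod>i<n. Lf a (x i))}
          \<le> exp (- l * real n * \<delta>)" for n
  proof -
    have "{x\<in>space (sig \<mu> a n). exp (real n * (KLa a + 2*\<delta>)) \<le> (\<Prod>i<n. Lf a (x i))}
        = {x\<in>space (PiM {..<n} (\<lambda>_. \<mu> a)). real n * (KLa a + 2*\<delta>) \<le> (\<Sum>i<n. ln (Lf a (x i)))}"
      unfolding sig_def prod_exp_ln by simp
    thus ?thesis unfolding sig_def[of \<mu> a n]
      using chernoff_sum[OF prob gm l(1) moments l(3), of n] by simp
  qed
  thus ?thesis using l(1) by blast
qed

lemma tail_lo: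
  assumes dp: "\<delta> > 0"
  shows "\<exists>l>0. \<forall>n. measure (sig \<mu> a n) {x\<in>space (sig \<mu> a n). (\<Prod>i<n. Lf a (x i)) \<le> exp (real n * (KLa a - 2*\<delta>))}
            \<le> exp (- l * real n * \<delta>)"
proof -
  have gm: "(\<lambda>x. - ln (Lf a x)) \<in> borel_measurable (\<mu> a)" by measurable
  have mom: "integrable (\<mu> a) (\<lambda>x. exp (s * - ln (Lf a x)))" for s
    using moments[of a "-s"] by simp
  have int: "(\<integral>x. - ln (Lf a x) \<partial>\<mu> a) = - KLa a" unfolding KLa_def by simp
  obtain l where l: "l > 0" "l \<le> 1" "(\<integral>x. exp (l * - ln (Lf a x)) \<partial>\<mu> a) \<le> exp (l * (- KLa a + \<delta>))"
    using mgf_bound[OF prob gm mom dp] unfolding int by blast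
  have "measure (sig \<mu> a n) {x\<in>space (sig \<mu> a n). (\<Prod>i<n. Lf a (x i)) \<le> exp (real n * (KLa a - 2*\<delta>))}
          \<le> exp (- l * real n * \<delta>)" for n
  proof -
    have "{x\<in>space (sig \<mu> a n). (\<Prod>i<n. Lf a (x i)) \<le> exp (real n * (KLa a - 2*\<delta>))}
        = {x\<in>space (PiM {..<n} (\<lambda>_. \<mu> a)). real n * (- KLa a + 2*\<delta>) \<le> (\<Sum>i<n. - ln (Lf a (x i)))}"
      unfolding sig_def prod_exp_ln by (auto simp: sum_negf algebra_simps)
    thus ?thesis unfolding sig_def[of \<mu> a n]
      using chernoff_sum[OF prob gm l(1) mom l(3), of n] by simp
  qed
  thus ?thesis using l(1) by blast
qed

lemma tail_ast:
  assumes T: "T > 0"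
  shows "measure (sig \<mu> ast n) {x\<in>space (sig \<mu> ast n). T \<le> (\<Prod>i<n. Lf a (x i))} \<le> 1 / T"
proof -
  interpret PP: prob_space "sig \<mu> ast n" by (rule sig_prob)
  have fm: "(\<lambda>x. ennreal (Lf a x)) \<in> borel_measurable (\<mu> ast)" by measurable
  have one: "(\<integral>\<^sup>+x. ennreal (Lf a x) \<partial>\<mu> ast) = 1"
  proof -
    have "(\<integral>\<^sup>+x. ennreal (Lf a x) \<partial>\<mu> ast) = emeasure (density (\<mu> ast) (\<lambda>x. ennreal (Lf a x))) (space (\<mu> ast))"
      by (simp add: emeasure_density)
    also have "\<dots> = emeasure (\<mu> a) (space (\<mu> a))"
    proof -
      have e1: "density (\<mu> ast) (\<lambda>x. ennreal (Lf a x)) = \<mu> a" by (rule Lf_dens[symmetric])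
      have e2: "space (\<mu> ast) = space (\<mu> a)" by (simp add: mt_space[OF mt])
      show ?thesis by (simp only: e1 e2)
    qed
    also have "\<dots> = 1" using prob_space.emeasure_space_1[OF prob] by simp
    finally show ?thesis .
  qed
  have eqS: "{x\<in>space (sig \<mu> ast n). T \<le> (\<Prod>i<n. Lf a (x i))}
      = {x\<in>space (PiM {..<n} (\<lambda>_. \<mu> ast)). ennreal T \<le> (\<Prod>i\<in>{..<n}. ennreal (Lf a (x i)))}"
    unfolding sig_def using Lf_pos[of a] T by (simp add: prod_ennreal less_imp_le ennreal_le_iff prod_nonneg)
  have "ennreal T * emeasure (sig \<mu> ast n) {x\<in>space (sig \<mu> ast n). T \<le> (\<Prod>i<n. Lf a (x i))} \<le> 1"
    unfolding eqS using PiM_Markov[OF prob fm, of "{..<n}" "ennreal T"] one unfolding sig_def by simp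
  hence "T * measure (sig \<mu> ast n) {x\<in>space (sig \<mu> ast n). T \<le> (\<Prod>i<n. Lf a (x i))} \<le> 1"
    using T by (simp add: PP.emeasure_eq_measure ennreal_mult''[symmetric])
  thus ?thesis using T by (simp add: field_simps)
qed

end

lemma ln_strict: fixes y :: real assumes "0 < y" "y \<noteq> 1" shows "ln y < y - 1"
proof -
  have s: "sqrt y > 0" using assms by simp
  have "ln y = 2 * ln (sqrt y)" using assms by (simp add: ln_sqrt)
  also have "\<dots> \<le> 2 * (sqrt y - 1)" using ln_le_minus_one[OF s] by simp
  also have "\<dots> < y - 1"
  proof -
    have "sqrt y \<noteq> 1" using assms by auto
    hence "0 < (sqrt y - 1)^2" by simp
    also have "(sqrt y - 1)^2 = y - 2 * sqrt y + 1" using assms by (simp add: power2_eq_square algebra_simps)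
    finally show ?thesis by simp
  qed
  finally show ?thesis .
qed

context mtech begin

lemma ln_int: "integrable (\<mu> a) (\<lambda>x. ln (Lf a x))"
proof (rule Bochner_Integration.integrable_bound[of _ "\<lambda>x. exp (1 * ln (Lf a x)) + exp ((-1) * ln (Lf a x))"])
  show "integrable (\<mu> a) (\<lambda>x. exp (1 * ln (Lf a x)) + exp ((-1) * ln (Lf a x)))"
    using moments[of a 1] moments[of a "-1"] by auto
  show "AE x in \<mu> a. norm (ln (Lf a x)) \<le> norm (exp (1 * ln (Lf a x)) + exp ((-1) * ln (Lf a x)))"
  proof (rule AE_I2)
    fix x
    let ?g = "ln (Lf a x)"
    have "\<bar>?g\<bar> \<le> exp \<bar>?g\<bar>" using exp_ge_add_one_self[of "\<bar>?g\<bar>"] by linarith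
    also have "\<dots> \<le> exp ?g + exp (- ?g)" by (cases "?g \<ge> 0") auto
    finally show "norm ?g \<le> norm (exp (1 * ?g) + exp ((-1) * ?g))" by simp
  qed
qed simp

lemma inv_int: "integrable (\<mu> a) (\<lambda>x. 1 / Lf a x)"
proof -
  have "exp ((-1) * ln (Lf a x)) = 1 / Lf a x" for x using Lf_pos[of a x] by (simp add: exp_minus divide_inverse)
  thus ?thesis using moments[of a "-1"] by simp
qed

lemma inv_integral: "(\<integral>x. 1 / Lf a x \<partial>\<mu> a) = 1"
proof -
  have "(\<integral>x. 1 / Lf a x \<partial>\<mu> a) = (\<integral>x. 1 / Lf a x \<partial>density (\<mu> ast) (\<lambda>x. ennreal (Lf a x)))"
    by (subst Lf_dens[of a, symmetric]) simp
  also have "\<dots> = (\<integral>x. Lf a x *\<^sub>R (1 / Lf a x) \<partial>\<mu> ast)"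
    using Lf_pos[of a] by (subst integral_density) (auto simp: less_imp_le)
  also have "\<dots> = (\<integral>x. 1 \<partial>\<mu> ast)"
  proof (intro Bochner_Integration.integral_cong refl)
    fix x show "Lf a x *\<^sub>R (1 / Lf a x) = 1" using Lf_pos[of a x] by simp
  qed
  also have "\<dots> = 1" using prob_space.prob_space[OF prob] by simp
  finally show ?thesis .
qed

lemma KLa_pos: assumes "a \<noteq> ast" shows "KLa a > 0"
proof -
  interpret pa: prob_space "\<mu> a" by (rule prob)
  define h where "h x = ln (Lf a x) - 1 + 1 / Lf a x" for x
  have hnn: "0 \<le> h x" for x
  proof -
    have "ln (1 / Lf a x) \<le> 1 / Lf a x - 1" using Lf_pos[of a x] by (intro ln_le_minus_one) simp
    thus ?thesis using Lf_pos[of a x] by (simp add: h_def ln_div)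
  qed
  have hint: "integrable (\<mu> a) h" unfolding h_def
    by (intro Bochner_Integration.integrable_add Bochner_Integration.integrable_diff ln_int inv_int pa.integrable_const)
  have hI: "integral\<^sup>L (\<mu> a) h = KLa a"
  proof -
    have "integral\<^sup>L (\<mu> a) h = (\<integral>x. ln (Lf a x) - 1 \<partial>\<mu> a) + (\<integral>x. 1 / Lf a x \<partial>\<mu> a)"
      unfolding h_def by (intro Bochner_Integration.integral_add Bochner_Integration.integrable_diff ln_int inv_int pa.integrable_const)
    also have "(\<integral>x. ln (Lf a x) - 1 \<partial>\<mu> a) = KLa a - 1"
      unfolding KLa_def using ln_int[of a] by (simp add: pa.prob_space)
    finally show ?thesis using inv_integral[of a] by simp
  qed
  have "KLa a \<ge> 0" unfolding hI[symmetric] using hnn by (intro integral_nonneg_AE) auto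
  moreover have "KLa a \<noteq> 0"
  proof
    assume K0: "KLa a = 0"
    have "AE x in \<mu> a. h x = 0"
      using integral_nonneg_eq_0_iff_AE[OF hint] hnn hI K0 by auto
    hence ae1: "AE x in \<mu> a. Lf a x = 1"
    proof eventually_elim
      case (elim x)
      show ?case
      proof (rule ccontr)
        assume ne: "Lf a x \<noteq> 1"
        have "ln (1 / Lf a x) < 1 / Lf a x - 1" using Lf_pos[of a x] ne by (intro ln_strict) auto
        hence "0 < h x" using Lf_pos[of a x] by (simp add: h_def ln_div)
        thus False using elim by simp
      qed
    qed
    have ae2: "AE x in \<mu> ast. Lf a x = 1"
      by (rule absolutely_continuous_AE[OF sets_eq ac ae1])
    have "\<mu> a = density (\<mu> ast) (\<lambda>x. ennreal (Lf a x))" by (rule Lf_dens)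
    also have "\<dots> = density (\<mu> ast) (\<lambda>x. 1)"
      using ae2 by (intro density_cong) auto
    also have "\<dots> = \<mu> ast" by (rule density_1)
    finally have "\<mu> a = \<mu> ast" .
    moreover have "\<mu> a \<noteq> \<mu> ast" using mt assms unfolding monitoring_tech_def by blast
    ultimately show False by simp
  qed
  ultimately show ?thesis by simp
qed

end

lemma ln_over_n_small:
  assumes "C > 0" "\<epsilon> > 0"
  shows "\<exists>N. \<forall>n\<ge>N. \<bar>ln C / real n\<bar> < \<epsilon>"
proof -
  have "(\<lambda>n. ln C / real n) \<longlonglongrightarrow> 0"
    by (intro tendsto_divide_0[OF tendsto_const] filterlim_at_top_imp_at_infinity[OF filterlim_real_sequentially])
  hence "\<exists>N. \<forall>n\<ge>N. norm (ln C / real n - 0) < \<epsilon>" by (rule LIMSEQ_D[OF _ assms(2)])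
  thus ?thesis by simp
qed

lemma exp_rate_sandwich:
  fixes f :: "nat \<Rightarrow> ereal"
  assumes d0: "\<delta>0 > 0" and sw: "\<And>\<delta>. \<delta> > 0 \<Longrightarrow> \<delta> < \<delta>0 \<Longrightarrow> \<exists>C1>0. \<exists>C2>0. \<exists>N. \<forall>n\<ge>N.
      ereal (C1 * exp (- real n * (r + \<delta>))) \<le> f n \<and> f n \<le> ereal (C2 * exp (- real n * (r - \<delta>)))"
  shows "exp_rate f r"
  unfolding exp_rate_def
proof
  obtain C1 C2 N where C: "C1 > 0" "C2 > 0" "\<forall>n\<ge>N.
      ereal (C1 * exp (- real n * (r + \<delta>0/2))) \<le> f n \<and> f n \<le> ereal (C2 * exp (- real n * (r - \<delta>0/2)))"
    using sw[of "\<delta>0/2"] d0 by auto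
  show "\<forall>\<^sub>F n in sequentially. 0 < f n \<and> f n < \<infinity>"
    unfolding eventually_sequentially
  proof (intro exI allI impI)
    fix n assume "N \<le> n"
    hence "ereal (C1 * exp (- real n * (r + \<delta>0/2))) \<le> f n" "f n \<le> ereal (C2 * exp (- real n * (r - \<delta>0/2)))"
      using C(3) by auto
    moreover have "0 < ereal (C1 * exp (- real n * (r + \<delta>0/2)))" using C(1) by simp
    moreover have "ereal (C2 * exp (- real n * (r - \<delta>0/2))) < \<infinity>" by simp
    ultimately show "0 < f n \<and> f n < \<infinity>"
      by (meson order_less_le_trans order_le_less_trans)
  qed
  show "(\<lambda>n. ln (real_of_ereal (f n)) / real n) \<longlonglongrightarrow> - r"
    unfolding LIMSEQ_iff
  proof (intro allI impI)
    fix \<epsilon> :: real assume ep: "\<epsilon> > 0"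
    define dd where "dd = min (\<epsilon>/2) (\<delta>0/2)"
    have dd: "dd > 0" "dd < \<delta>0" "dd \<le> \<epsilon>/2" unfolding dd_def using ep d0 by auto
    obtain C1 C2 N where C: "C1 > 0" "C2 > 0" "\<forall>n\<ge>N.
      ereal (C1 * exp (- real n * (r + dd))) \<le> f n \<and> f n \<le> ereal (C2 * exp (- real n * (r - dd)))"
      using sw[OF dd(1) dd(2)] by auto
    obtain N1 where N1: "\<forall>n\<ge>N1. \<bar>ln C1 / real n\<bar> < \<epsilon>/2" using ln_over_n_small[OF C(1), of "\<epsilon>/2"] ep by auto
    obtain N2 where N2: "\<forall>n\<ge>N2. \<bar>ln C2 / real n\<bar> < \<epsilon>/2" using ln_over_n_small[OF C(2), of "\<epsilon>/2"] ep by auto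
    show "\<exists>no. \<forall>n\<ge>no. norm (ln (real_of_ereal (f n)) / real n - - r) < \<epsilon>"
    proof (intro exI allI impI)
      fix n assume n: "max (max N N1) (max N2 1) \<le> n"
      have npos: "real n > 0" using n by auto
      have lo: "ereal (C1 * exp (- real n * (r + dd))) \<le> f n" and hi: "f n \<le> ereal (C2 * exp (- real n * (r - dd)))"
        using C(3) n by auto
      have lpos: "0 < C1 * exp (- real n * (r + dd))" using C(1) by simp
      obtain y where y: "f n = ereal y" using lo hi by (cases "f n") auto
      have y1: "C1 * exp (- real n * (r + dd)) \<le> y" using lo y by simp
      have y2: "y \<le> C2 * exp (- real n * (r - dd))" using hi y by simp
      have ypos: "y > 0" using y1 lpos by linarith
      have l1: "ln C1 - real n * (r + dd) \<le> ln y"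
      proof -
        have "ln (C1 * exp (- real n * (r + dd))) \<le> ln y" using y1 lpos by (subst ln_le_cancel_iff) auto
        thus ?thesis using C(1) by (simp add: ln_mult)
      qed
      have l2: "ln y \<le> ln C2 - real n * (r - dd)"
      proof -
        have "ln y \<le> ln (C2 * exp (- real n * (r - dd)))" using y2 ypos by (subst ln_le_cancel_iff) auto
        thus ?thesis using C(2) by (simp add: ln_mult)
      qed
      have e1: "(ln C1 - real n * (r + dd)) / real n = ln C1 / real n - (r + dd)"
        using npos by (simp add: diff_divide_distrib)
      have e2: "(ln C2 - real n * (r - dd)) / real n = ln C2 / real n - (r - dd)"
        using npos by (simp add: diff_divide_distrib)
      have "(ln C1 - real n * (r + dd)) / real n \<le> ln y / real n"
        using l1 npos by (intro divide_right_mono) auto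
      hence b1: "ln C1 / real n - (r + dd) \<le> ln y / real n" using e1 by simp
      have "ln y / real n \<le> (ln C2 - real n * (r - dd)) / real n"
        using l2 npos by (intro divide_right_mono) auto
      hence b2: "ln y / real n \<le> ln C2 / real n - (r - dd)" using e2 by simp
      have b3: "\<bar>ln C1 / real n\<bar> < \<epsilon>/2" "\<bar>ln C2 / real n\<bar> < \<epsilon>/2" using N1 N2 n by auto
      have "\<bar>ln y / real n + r\<bar> < \<epsilon>" using b1 b2 b3 dd(3) by (simp only: abs_less_iff) linarith
      thus "norm (ln (real_of_ereal (f n)) / real n - - r) < \<epsilon>" using y by simp
    qed
  qed
qed

lemma exp_small:
  assumes "b > 0" "t > 0"
  shows "\<exists>N. \<forall>n\<ge>N. exp (- b * real n) \<le> t"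
proof -
  define N where "N = nat \<lceil>- ln t / b\<rceil>"
  have "exp (- b * real n) \<le> t" if n: "n \<ge> N" for n
  proof -
    have "- ln t / b \<le> real n" using n unfolding N_def by linarith
    hence "- ln t \<le> b * real n" using assms(1) by (simp add: field_simps)
    hence "- b * real n \<le> ln t" by simp
    hence "exp (- b * real n) \<le> exp (ln t)" by simp
    thus ?thesis using assms(2) by simp
  qed
  thus ?thesis by blast
qed

lemma finite_uniform_N:
  assumes "finite A" "\<forall>a\<in>A. \<exists>N. \<forall>n\<ge>N. P a n"
  shows "\<exists>N. \<forall>a\<in>A. \<forall>n\<ge>N. P a (n::nat)"
proof -
  obtain f where f: "\<forall>a\<in>A. \<forall>n\<ge>f a. P a n" using bchoice[OF assms(2)] by blast
  have "\<forall>a\<in>A. \<forall>n\<ge>(\<Sum>a\<in>A. f a). P a n"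
  proof (intro ballI allI impI)
    fix a n assume a: "a \<in> A" and n: "(\<Sum>a\<in>A. f a) \<le> n"
    have "f a \<le> (\<Sum>a\<in>A. f a)" using a assms(1) by (intro member_le_sum) auto
    thus "P a n" using f a n by auto
  qed
  thus ?thesis by blast
qed

lemma expect_bin:
  assumes "prob_space M" "E \<in> sets M" "lo \<le> hi"
  shows "expect_lb M (\<lambda>x. if x \<in> E then lo else hi) lo = ereal (lo + (hi - lo) * measure M (space M - E))"
proof -
  interpret prob_space M by fact
  have "(\<integral>\<^sup>+x. ennreal ((if x \<in> E then lo else hi) - lo) \<partial>M) = (\<integral>\<^sup>+x. ennreal (hi - lo) * indicator (space M - E) x \<partial>M)"
    by (intro nn_integral_cong) (auto simp: indicator_def)
  also have "\<dots> = ennreal (hi - lo) * emeasure M (space M - E)"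
    using assms(2) by (intro nn_integral_cmult_indicator) auto
  also have "\<dots> = ennreal ((hi - lo) * measure M (space M - E))"
    using assms(3) by (simp add: emeasure_eq_measure ennreal_mult)
  finally show ?thesis unfolding expect_lb_def using assms(3) by simp
qed

lemma ereal_lb_shift: "ereal (a + b) \<le> C \<Longrightarrow> ereal b \<le> C - ereal a"
  by (cases C) auto
lemma ereal_ub_shift: "C \<le> ereal (a + b) \<Longrightarrow> C - ereal a \<le> ereal b"
  by (cases C) auto

locale setting = util u u' u'' wl + mtech X \<mu> ast
  for u u' u'' :: "real \<Rightarrow> real" and wl :: real and X :: "'x::euclidean_space set"
    and \<mu> :: "'a::finite \<Rightarrow> 'x measure" and ast :: 'a +
  fixes c :: "'a \<Rightarrow> real"
  assumes c_range: "range c \<subseteq> interior (u ` {wl..})"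
    and c_lower: "\<exists>a. c ast > c a"
    and c_distinct: "\<forall>a. a \<noteq> ast \<longrightarrow> c a \<noteq> c ast"
begin

definition wc where "wc = C_FB u c ast wl"
definition Am where "Am = A_minus c ast"
definition rr where "rr = Min (KLa ` Am)"

lemma c_gt: "u wl < c a"
proof -
  have "c a \<in> interior (u ` {wl..})" using c_range by auto
  then obtain e where e: "e > 0" "ball (c a) e \<subseteq> u ` {wl..}" using mem_interior by blast
  have "c a - e/2 \<in> ball (c a) e" using e by (simp add: dist_real_def)
  hence "c a - e/2 \<in> u ` {wl..}" using e by blast
  then obtain t where t: "t \<ge> wl" "c a - e/2 = u t" by auto
  hence "u wl \<le> c a - e/2" using u_mono[of wl t] by auto
  thus ?thesis using e by linarith
qed

lemma eps: "\<exists>\<epsilon>>0. ball (c ast) \<epsilon> \<subseteq> u ` {wl..}"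
  using c_range mem_interior by blast

lemma wc_props: "wl \<le> wc" "u wc = c ast"
proof -
  have ci: "c ast \<in> u ` {wl..}" using c_range interior_subset by blast
  show "wl \<le> wc" unfolding wc_def C_FB_def using inv_into_into[OF ci] by simp
  show "u wc = c ast" unfolding wc_def C_FB_def using f_inv_into_f[OF ci] .
qed

lemma Am_fin: "finite Am" by simp
lemma Am_ne: "Am \<noteq> {}" using c_lower by (auto simp: Am_def A_minus_def)
lemma Am_c: "a \<in> Am \<Longrightarrow> c a < c ast" by (simp add: Am_def A_minus_def)
lemma Am_ast: "a \<in> Am \<Longrightarrow> a \<noteq> ast" using Am_c by auto

lemma rr_props: "rr > 0" "\<exists>a0\<in>Am. KLa a0 = rr" "\<And>a. a \<in> Am \<Longrightarrow> rr \<le> KLa a"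
proof -
  have "Min (KLa ` Am) \<in> KLa ` Am" by (rule Min_in) (auto simp: Am_ne)
  thus "\<exists>a0\<in>Am. KLa a0 = rr" unfolding rr_def by auto
  show "\<And>a. a \<in> Am \<Longrightarrow> rr \<le> KLa a" unfolding rr_def by simp
  from \<open>\<exists>a0\<in>Am. KLa a0 = rr\<close> obtain a0 where "a0 \<in> Am" "KLa a0 = rr" by blast
  thus "rr > 0" using KLa_pos[OF Am_ast[of a0]] by simp
qed

lemma prodL_meas[measurable]: "(\<lambda>x. \<Prod>i<n. Lf a (x i)) \<in> borel_measurable (sig \<mu> b n)"
  unfolding sig_def by measurable

lemma LB:
  assumes dp: "\<delta> > 0"
  shows "\<exists>C1>0. \<exists>N. \<forall>n\<ge>N. \<forall>w. is_contract \<mu> ast wl n w \<and> IC \<mu> u c ast wl n w \<and> IR \<mu> u c ast wl n w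
           \<longrightarrow> ereal (wc + C1 * exp (- real n * (rr + \<delta>))) \<le> expect_lb (sig \<mu> ast n) w wl"
proof -
  obtain a0 where a0: "a0 \<in> Am" "KLa a0 = rr" using rr_props by blast
  define \<Delta> where "\<Delta> = c ast - c a0"
  have \<Delta>: "\<Delta> > 0" using Am_c[OF a0(1)] by (simp add: \<Delta>_def)
  obtain \<kappa> where kap: "\<kappa> > 0" "\<forall>t\<in>{wl..wc+1}. u'' t \<le> -\<kappa>" using kappa_exists by blast
  define C0 where "C0 = \<kappa> * \<Delta>^2 / (8 * u' wc * (u' wl)^2)"
  have C0: "C0 > 0" unfolding C0_def using kap \<Delta> upos[of wc] upos[of wl] wc_props by auto
  define C1 where "C1 = min 1 C0"
  have C1: "C1 > 0" using C0 by (simp add: C1_def)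
  obtain l where l: "l > 0" "\<forall>n. measure (sig \<mu> a0 n) {x\<in>space (sig \<mu> a0 n). exp (real n * (KLa a0 + 2*(\<delta>/2))) \<le> (\<Prod>i<n. Lf a0 (x i))}
            \<le> exp (- l * real n * (\<delta>/2))"
    using tail_hi[of "\<delta>/2" a0] dp by auto
  define M0 where "M0 = u (wc+1) - u wl"
  have M0: "M0 \<ge> 0" unfolding M0_def using u_mono[of wl "wc+1"] wc_props by auto
  obtain N where N: "\<forall>n\<ge>N. exp (- (l * (\<delta>/2)) * real n) \<le> \<Delta> / (2 * (M0 + 1))"
    using exp_small[of "l * (\<delta>/2)" "\<Delta> / (2 * (M0 + 1))"] l(1) dp \<Delta> M0 by auto
  have "\<forall>n\<ge>N. \<forall>w. is_contract \<mu> ast wl n w \<and> IC \<mu> u c ast wl n w \<and> IR \<mu> u c ast wl n w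
           \<longrightarrow> ereal (wc + C1 * exp (- real n * (rr + \<delta>))) \<le> expect_lb (sig \<mu> ast n) w wl"
  proof (intro allI impI)
    fix n w assume n: "N \<le> n" and w: "is_contract \<mu> ast wl n w \<and> IC \<mu> u c ast wl n w \<and> IR \<mu> u c ast wl n w"
    define K where "K = exp (real n * (rr + \<delta>))"
    have K: "K > 0" unfolding K_def by simp
    have wm: "w \<in> borel_measurable (sig \<mu> ast n)" "\<forall>x\<in>space (sig \<mu> ast n). wl \<le> w x"
      using w unfolding is_contract_def by auto
    have ICa: "expect_lb (sig \<mu> a0 n) (u \<circ> w) (u wl) - ereal (c a0) \<le> expect_lb (sig \<mu> ast n) (u \<circ> w) (u wl) - ereal (c ast)"
      using w unfolding IC_def by blast
    have IRa: "expect_lb (sig \<mu> ast n) (u \<circ> w) (u wl) - ereal (c ast) \<ge> 0"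
      using w unfolding IR_def by blast
    have tailn: "M0 * measure (sig \<mu> a0 n) {x\<in>space (sig \<mu> a0 n). K \<le> (\<Prod>i<n. Lf a0 (x i))} \<le> \<Delta>/2"
    proof -
      have "K = exp (real n * (KLa a0 + 2*(\<delta>/2)))" unfolding K_def a0(2) by simp
      hence "measure (sig \<mu> a0 n) {x\<in>space (sig \<mu> a0 n). K \<le> (\<Prod>i<n. Lf a0 (x i))} \<le> exp (- (l * (\<delta>/2)) * real n)"
        using l(2)[rule_format, of n] by (simp add: algebra_simps)
      also have "\<dots> \<le> \<Delta> / (2 * (M0 + 1))" using N n by auto
      finally have "M0 * measure (sig \<mu> a0 n) {x\<in>space (sig \<mu> a0 n). K \<le> (\<Prod>i<n. Lf a0 (x i))} \<le> M0 * (\<Delta> / (2 * (M0 + 1)))"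
        using M0 by (intro mult_left_mono) auto
      also have "\<dots> \<le> \<Delta>/2" using M0 \<Delta> by (simp add: field_simps)
      finally show ?thesis .
    qed
    have core: "ereal (wc + min 1 (\<kappa> * (c ast - c a0)^2 / (8 * u' wc * (u' wl)^2 * K))) \<le> expect_lb (sig \<mu> ast n) w wl"
    proof (rule LB_core[OF sig_prob sig_dens sig_prob _ _ wm ICa IRa _ wc_props kap K])
      show "\<forall>x. 0 \<le> (\<Prod>i<n. Lf a0 (x i))" using Lf_pos by (simp add: prod_nonneg less_imp_le)
      show "c a0 < c ast" using \<Delta> \<Delta>_def by simp
      show "(u (wc + 1) - u wl) * measure (sig \<mu> a0 n) {x \<in> space (sig \<mu> a0 n). K \<le> (\<Prod>i<n. Lf a0 (x i))} \<le> (c ast - c a0) / 2"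
        using tailn unfolding M0_def \<Delta>_def .
    qed simp
    have e: "exp (- real n * (rr + \<delta>)) \<le> 1" using rr_props(1) dp by simp
    have eK: "exp (- real n * (rr + \<delta>)) * K = 1" unfolding K_def by (simp add: exp_add[symmetric])
    have "\<kappa> * (c ast - c a0)^2 / (8 * u' wc * (u' wl)^2 * K) = C0 / K"
      unfolding C0_def \<Delta>_def by (simp add: field_simps)
    also have "\<dots> = C0 * exp (- real n * (rr + \<delta>))" using eK K by (simp add: field_simps)
    finally have "\<kappa> * (c ast - c a0)^2 / (8 * u' wc * (u' wl)^2 * K) = C0 * exp (- real n * (rr + \<delta>))" .
    moreover have "C1 * exp (- real n * (rr + \<delta>)) \<le> min 1 (C0 * exp (- real n * (rr + \<delta>)))"
    proof -
      have "C1 * exp (- real n * (rr + \<delta>)) \<le> C0 * exp (- real n * (rr + \<delta>))"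
        unfolding C1_def by (intro mult_right_mono) auto
      moreover have "C1 * exp (- real n * (rr + \<delta>)) \<le> 1"
        using e C1 unfolding C1_def by (smt (verit) exp_gt_zero mult_le_one)
      ultimately show ?thesis by simp
    qed
    ultimately show "ereal (wc + C1 * exp (- real n * (rr + \<delta>))) \<le> expect_lb (sig \<mu> ast n) w wl"
      using core by (smt (verit) ereal_less_eq(3) order_trans)
  qed
  thus ?thesis using C1 by blast
qed

end

context setting begin

lemma sig_sets_eq: "sets (sig \<mu> b n) = sets (sig \<mu> ast n)" by (rule sig_sets)
lemma sig_space_eq: "space (sig \<mu> b n) = space (sig \<mu> ast n)" by (rule sig_space)

lemma UB:
  assumes dp: "\<delta> > 0" and dr: "\<delta> < rr"
  shows "\<exists>C2>0. \<exists>N. \<forall>n\<ge>N. \<exists>w. is_contract \<mu> ast wl n w \<and> card (w ` space (sig \<mu> ast n)) = 2 \<and>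
           IC \<mu> u c ast wl n w \<and> IR \<mu> u c ast wl n w \<and>
           expect_lb (sig \<mu> ast n) w wl \<le> ereal (wc + C2 * exp (- real n * (rr - \<delta>)))"
proof -
  define cs where "cs = c ast"
  define uL where "uL = u wl"
  have csL: "uL < cs" unfolding cs_def uL_def by (rule c_gt)
  obtain a0 where a0: "a0 \<in> Am" "KLa a0 = rr" using rr_props by blast
  obtain \<epsilon> where ep: "\<epsilon> > 0" "ball cs \<epsilon> \<subseteq> u ` {wl..}" using eps unfolding cs_def by blast
  define \<gamma>0 where "\<gamma>0 = Min ((\<lambda>a. \<bar>c a - cs\<bar>) ` {a. a \<noteq> ast})"
  have neA: "{a. a \<noteq> ast} \<noteq> {}" using Am_ast[OF a0(1)] by auto
  have g0: "\<gamma>0 > 0" unfolding \<gamma>0_def using neA c_distinct by (subst Min_gr_iff) (auto simp: cs_def)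
  have g0le: "\<And>a. a \<noteq> ast \<Longrightarrow> \<gamma>0 \<le> \<bar>c a - cs\<bar>" unfolding \<gamma>0_def by (intro Min_le) auto
  define \<gamma> where "\<gamma> = min (\<epsilon>/2) \<gamma>0"
  have g: "\<gamma> > 0" "\<gamma> \<le> \<epsilon>/2" "\<And>a. a \<noteq> ast \<Longrightarrow> \<gamma> \<le> \<bar>c a - cs\<bar>"
    unfolding \<gamma>_def using ep g0 g0le by (auto intro: min.coboundedI2)
  have "cs + \<epsilon>/2 \<in> ball cs \<epsilon>" using ep by (simp add: dist_real_def)
  hence "cs + \<epsilon>/2 \<in> u ` {wl..}" using ep by blast
  then obtain B where B: "B \<ge> wl" "u B = cs + \<epsilon>/2" by auto
  have uB: "u' B > 0" using upos B by auto
  define C2 where "C2 = 2 * (cs - uL) * real (card Am) / u' B"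
  have cardA: "card Am > 0" using Am_ne by (simp add: card_gt_0_iff)
  have C2: "C2 > 0" unfolding C2_def using csL uB cardA by auto
  define \<eta> where "\<eta> a = (c a - uL) / (cs + \<gamma> - uL)" for a
  have eta: "\<And>a. a \<in> Am \<Longrightarrow> 0 < \<eta> a \<and> \<eta> a < 1"
  proof -
    fix a assume a: "a \<in> Am"
    have "uL < c a" unfolding uL_def by (rule c_gt)
    moreover have "c a < cs" using Am_c[OF a] by (simp add: cs_def)
    ultimately show "0 < \<eta> a \<and> \<eta> a < 1" unfolding \<eta>_def using g(1) by (simp add: field_simps)
  qed
  have "\<forall>a\<in>Am. \<exists>N. \<forall>n\<ge>N. measure (sig \<mu> a n) {x\<in>space (sig \<mu> a n). (\<Prod>i<n. Lf a (x i)) \<le> exp (real n * (KLa a - 2*(\<delta>/2)))} \<le> \<eta> a"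
  proof
    fix a assume a: "a \<in> Am"
    obtain l where l: "l > 0" "\<forall>n. measure (sig \<mu> a n) {x\<in>space (sig \<mu> a n). (\<Prod>i<n. Lf a (x i)) \<le> exp (real n * (KLa a - 2*(\<delta>/2)))}
            \<le> exp (- l * real n * (\<delta>/2))" using tail_lo[of "\<delta>/2" a] dp by auto
    obtain N where N: "\<forall>n\<ge>N. exp (- (l * (\<delta>/2)) * real n) \<le> \<eta> a"
      using exp_small[of "l * (\<delta>/2)" "\<eta> a"] l(1) dp eta[OF a] by auto
    show "\<exists>N. \<forall>n\<ge>N. measure (sig \<mu> a n) {x\<in>space (sig \<mu> a n). (\<Prod>i<n. Lf a (x i)) \<le> exp (real n * (KLa a - 2*(\<delta>/2)))} \<le> \<eta> a"
    proof (intro exI allI impI)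
      fix n assume "N \<le> n"
      thus "measure (sig \<mu> a n) {x\<in>space (sig \<mu> a n). (\<Prod>i<n. Lf a (x i)) \<le> exp (real n * (KLa a - 2*(\<delta>/2)))} \<le> \<eta> a"
      proof -
        have "exp (- l * real n * (\<delta>/2)) = exp (- (l * (\<delta>/2)) * real n)" by (simp add: algebra_simps)
        moreover have "exp (- (l * (\<delta>/2)) * real n) \<le> \<eta> a" using N \<open>N \<le> n\<close> by auto
        ultimately show ?thesis using l(2)[rule_format, of n] by linarith
      qed
    qed
  qed
  hence "\<exists>N. \<forall>a\<in>Am. \<forall>n\<ge>N. measure (sig \<mu> a n) {x\<in>space (sig \<mu> a n). (\<Prod>i<n. Lf a (x i)) \<le> exp (real n * (KLa a - 2*(\<delta>/2)))} \<le> \<eta> a"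
    by (rule finite_uniform_N[OF Am_fin])
  then obtain N1 where N1: "\<forall>a\<in>Am. \<forall>n\<ge>N1. measure (sig \<mu> a n) {x\<in>space (sig \<mu> a n). (\<Prod>i<n. Lf a (x i)) \<le> exp (real n * (KLa a - 2*(\<delta>/2)))} \<le> \<eta> a"
    by (elim exE)
  define t0 where "t0 = min (1 / (2 * real (card Am))) (\<gamma> / (2 * (cs - uL) * real (card Am)))"
  have t0: "t0 > 0" unfolding t0_def using cardA g(1) csL by auto
  obtain N2 where N2: "\<forall>n\<ge>N2. exp (- (rr - \<delta>) * real n) \<le> t0" using exp_small[of "rr - \<delta>" t0] dr t0 by auto
  have "\<forall>n\<ge>max N1 N2. \<exists>w. is_contract \<mu> ast wl n w \<and> card (w ` space (sig \<mu> ast n)) = 2 \<and>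
           IC \<mu> u c ast wl n w \<and> IR \<mu> u c ast wl n w \<and>
           expect_lb (sig \<mu> ast n) w wl \<le> ereal (wc + C2 * exp (- real n * (rr - \<delta>)))"
  proof (intro allI impI)
    fix n assume n: "max N1 N2 \<le> n"
    interpret P0: prob_space "sig \<mu> ast n" by (rule sig_prob)
    define S where "S = space (sig \<mu> ast n)"
    define Ev where "Ev a = {x\<in>S. exp (real n * (KLa a - \<delta>)) \<le> (\<Prod>i<n. Lf a (x i))}" for a
    define Pn where "Pn = (\<Union>a\<in>Am. Ev a)"
    have Evs: "Ev a \<in> sets (sig \<mu> ast n)" for a unfolding Ev_def S_def by measurable
    have Pns: "Pn \<in> sets (sig \<mu> ast n)" unfolding Pn_def using Evs Am_fin by auto
    have PnS: "Pn \<subseteq> S" unfolding Pn_def Ev_def by auto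
    define Bn where "Bn = real (card Am) * exp (- real n * (rr - \<delta>))"
    have Bn: "Bn \<le> 1/2" "2 * (cs - uL) * Bn \<le> \<gamma>" "0 \<le> Bn"
    proof -
      have e: "exp (- (rr - \<delta>) * real n) \<le> t0" using N2 n by auto
      have e': "exp (- real n * (rr - \<delta>)) = exp (- (rr - \<delta>) * real n)" by (simp add: algebra_simps)
      have "Bn \<le> real (card Am) * t0" unfolding Bn_def e' using e by (intro mult_left_mono) auto
      also have "\<dots> \<le> real (card Am) * (1 / (2 * real (card Am)))"
        unfolding t0_def by (intro mult_left_mono) auto
      also have "\<dots> = 1/2" using cardA Am_ne by simp
      finally show "Bn \<le> 1/2" .
      have "2 * (cs - uL) * Bn \<le> 2 * (cs - uL) * (real (card Am) * t0)"
        unfolding Bn_def e' using e csL by (intro mult_left_mono) auto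
      also have "\<dots> \<le> 2 * (cs - uL) * (real (card Am) * (\<gamma> / (2 * (cs - uL) * real (card Am))))"
        unfolding t0_def using csL by (intro mult_left_mono) auto
      also have "\<dots> = (2 * (cs - uL) * real (card Am)) * (\<gamma> / (2 * (cs - uL) * real (card Am)))"
        by (simp only: mult.assoc)
      also have "\<dots> = \<gamma>" using cardA csL Am_ne by simp
      finally show "2 * (cs - uL) * Bn \<le> \<gamma>" .
      show "0 \<le> Bn" unfolding Bn_def by simp
    qed
    define p where "p = measure (sig \<mu> ast n) Pn"
    have p: "p \<le> Bn" "0 \<le> p"
    proof -
      have "p \<le> (\<Sum>a\<in>Am. measure (sig \<mu> ast n) (Ev a))"
        unfolding p_def Pn_def using Evs by (intro P0.finite_measure_subadditive_finite Am_fin) auto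
      also have "\<dots> \<le> (\<Sum>a\<in>Am. exp (- real n * (rr - \<delta>)))"
      proof (intro sum_mono)
        fix a assume a: "a \<in> Am"
        have "measure (sig \<mu> ast n) (Ev a) \<le> 1 / exp (real n * (KLa a - \<delta>))"
          unfolding Ev_def S_def by (rule tail_ast) simp
        also have "\<dots> = exp (- real n * (KLa a - \<delta>))" by (simp add: exp_minus divide_inverse)
        also have "\<dots> \<le> exp (- real n * (rr - \<delta>))" using rr_props(3)[OF a] by (simp add: mult_left_mono)
        finally show "measure (sig \<mu> ast n) (Ev a) \<le> exp (- real n * (rr - \<delta>))" .
      qed
      also have "\<dots> = Bn" unfolding Bn_def by simp
      finally show "p \<le> Bn" .
      show "0 \<le> p" unfolding p_def by simp
    qed
    have p2: "p \<le> 1/2" using p Bn by linarith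
    have pq: "(cs - uL) * p / (1 - p) \<le> 2 * (cs - uL) * p"
    proof -
      have "0 \<le> p * (1 - 2 * p)" using p2 p by (intro mult_nonneg_nonneg) auto
      hence "p \<le> 2 * p * (1 - p)" by (simp add: algebra_simps)
      hence "p / (1 - p) \<le> 2 * p" using p2 by (simp add: divide_le_eq)
      hence "(cs - uL) * (p / (1 - p)) \<le> (cs - uL) * (2 * p)" using csL by (intro mult_left_mono) auto
      thus ?thesis by (simp add: algebra_simps)
    qed
    define uH where "uH = cs + (cs - uL) * p / (1 - p)"
    have uH: "cs \<le> uH" "uH \<le> cs + \<gamma>"
    proof -
      note q = pq
      show "cs \<le> uH" unfolding uH_def using p p2 csL by simp
      have "2 * (cs - uL) * p \<le> 2 * (cs - uL) * Bn" using p csL by (intro mult_left_mono) auto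
      thus "uH \<le> cs + \<gamma>" unfolding uH_def using q Bn by linarith
    qed
    have "uH \<in> ball cs \<epsilon>" using uH g(1,2) ep by (simp add: dist_real_def)
    hence "uH \<in> u ` {wl..}" using ep by blast
    then obtain wH where wH: "wH \<ge> wl" "u wH = uH" by auto
    have wHB: "wH \<le> B"
    proof (rule ccontr)
      assume "\<not> wH \<le> B"
      hence "u B < u wH" using u_strict[of B wH] B by auto
      thus False using wH uH B g by linarith
    qed
    have wHl: "wl < wH"
    proof (rule ccontr)
      assume "\<not> wl < wH" hence "wH = wl" using wH by auto
      thus False using wH uH csL uL_def by auto
    qed
    define w where "w x = (if x \<in> Pn then wl else wH)" for x
    have uw: "u \<circ> w = (\<lambda>x. if x \<in> Pn then uL else uH)" unfolding w_def uL_def using wH by auto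
    have Eb: "expect_lb (sig \<mu> b n) (u \<circ> w) (u wl) = ereal (uL + (uH - uL) * measure (sig \<mu> b n) (S - Pn))" for b
    proof -
      have "Pn \<in> sets (sig \<mu> b n)" unfolding sig_sets_eq[of b n] by (rule Pns)
      hence "expect_lb (sig \<mu> b n) (\<lambda>x. if x \<in> Pn then uL else uH) uL = ereal (uL + (uH - uL) * measure (sig \<mu> b n) (space (sig \<mu> b n) - Pn))"
        using uH csL by (intro expect_bin sig_prob) auto
      thus ?thesis unfolding uw uL_def[symmetric] S_def sig_space_eq[of b n] .
    qed
    have compl: "measure (sig \<mu> ast n) (S - Pn) = 1 - p"
      unfolding p_def S_def using Pns by (simp add: P0.prob_compl)
    have IRe: "uL + (uH - uL) * (1 - p) = cs"
    proof -
      have "1 - p > 0" using p2 by simp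
      thus ?thesis unfolding uH_def by (simp add: field_simps)
    qed
    have E0: "expect_lb (sig \<mu> ast n) (u \<circ> w) (u wl) = ereal cs" using Eb[of ast] compl IRe by simp
    have ICb: "uL + (uH - uL) * measure (sig \<mu> b n) (S - Pn) \<le> c b" for b
    proof (cases "b = ast")
      case True thus ?thesis using Eb compl IRe cs_def by simp
    next
      case False
      interpret Pb: prob_space "sig \<mu> b n" by (rule sig_prob)
      have m1: "measure (sig \<mu> b n) (S - Pn) \<le> 1" by simp
      have hu: "0 \<le> uH - uL" using uH csL by simp
      show ?thesis
      proof (cases "c b > cs")
        case True
        have "(uH - uL) * measure (sig \<mu> b n) (S - Pn) \<le> (uH - uL) * 1"
          using hu m1 by (intro mult_left_mono) auto
        moreover have "uH \<le> c b" using uH g(3)[OF False] True by simp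
        ultimately show ?thesis by simp
      next
        case False2: False
        hence bA: "b \<in> Am" using c_distinct False unfolding Am_def A_minus_def cs_def by force
        have sub: "S - Pn \<subseteq> {x\<in>space (sig \<mu> b n). (\<Prod>i<n. Lf b (x i)) \<le> exp (real n * (KLa b - 2*(\<delta>/2)))}"
          unfolding Pn_def Ev_def S_def using bA sig_space_eq[of b] by auto
        have "measure (sig \<mu> b n) (S - Pn) \<le> measure (sig \<mu> b n) {x\<in>space (sig \<mu> b n). (\<Prod>i<n. Lf b (x i)) \<le> exp (real n * (KLa b - 2*(\<delta>/2)))}"
          by (rule Pb.finite_measure_mono[OF sub]) measurable
        also have "\<dots> \<le> \<eta> b" using N1 bA n by auto
        finally have mb: "measure (sig \<mu> b n) (S - Pn) \<le> \<eta> b" .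
        have "(uH - uL) * measure (sig \<mu> b n) (S - Pn) \<le> (cs + \<gamma> - uL) * \<eta> b"
          using mb hu uH eta[OF bA] by (intro mult_mono) auto
        also have "\<dots> = c b - uL" unfolding \<eta>_def using g(1) csL by (simp add: field_simps)
        finally show ?thesis by simp
      qed
    qed
    have is_c: "is_contract \<mu> ast wl n w"
      unfolding is_contract_def w_def using Pns wH by (auto intro!: measurable_If_set)
    have ICw: "IC \<mu> u c ast wl n w" unfolding IC_def
    proof
      fix b
      show "expect_lb (sig \<mu> b n) (u \<circ> w) (u wl) - ereal (c b) \<le> expect_lb (sig \<mu> ast n) (u \<circ> w) (u wl) - ereal (c ast)"
        unfolding Eb[of b] E0 using ICb[of b] cs_def by simp
    qed
    have IRw: "IR \<mu> u c ast wl n w" unfolding IR_def E0 cs_def by simp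
    have card2: "card (w ` S) = 2"
    proof -
      have "S - Pn \<noteq> {}"
      proof
        assume e: "S - Pn = {}" have "1 - p = 0" using compl unfolding e by simp
        thus False using p2 by simp
      qed
      then obtain x1 where x1: "x1 \<in> S" "x1 \<notin> Pn" by auto
      have "Pn \<noteq> {}"
      proof
        assume e: "Pn = {}"
        have "measure (sig \<mu> a0 n) (S - Pn) = 1" unfolding e S_def
          using prob_space.prob_space[OF sig_prob[of a0 n]] sig_space_eq[of a0] by simp
        moreover have "uL + (uH - uL) * measure (sig \<mu> a0 n) (S - Pn) \<le> c a0" by (rule ICb)
        ultimately show False using uH Am_c[OF a0(1)] cs_def by simp
      qed
      then obtain x2 where x2: "x2 \<in> Pn" by auto
      have "w ` S = {wl, wH}"
        using x1 x2 PnS unfolding w_def by auto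
      thus ?thesis using wHl by simp
    qed
    have cost: "expect_lb (sig \<mu> ast n) w wl \<le> ereal (wc + C2 * exp (- real n * (rr - \<delta>)))"
    proof -
      have "expect_lb (sig \<mu> ast n) w wl = ereal (wl + (wH - wl) * measure (sig \<mu> ast n) (space (sig \<mu> ast n) - Pn))"
        unfolding w_def using Pns wH by (intro expect_bin sig_prob) auto
      also have "\<dots> = ereal (wl + (wH - wl) * (1 - p))" using compl S_def by simp
      also have "\<dots> \<le> ereal wH"
      proof -
        have "(wH - wl) * (1 - p) \<le> (wH - wl) * 1" using wH p by (intro mult_left_mono) auto
        thus ?thesis by simp
      qed
      also have "wH \<le> wc + C2 * exp (- real n * (rr - \<delta>))"
      proof -
        have tg: "u wc \<le> u wH + u' wH * (wc - wH)" by (rule tangent) (use wH wc_props in auto)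
        have upH: "u' wH \<ge> u' B" using u'_anti[of wH B] wH wHB by auto
        have uHpos: "u' wH > 0" using upos wH by auto
        have "u' wH * (wH - wc) \<le> uH - cs" using tg wH wc_props cs_def by (simp add: algebra_simps)
        hence "wH - wc \<le> (uH - cs) / u' wH" using uHpos by (simp add: field_simps)
        also have "\<dots> \<le> (uH - cs) / u' B" using uH upH uB by (intro divide_left_mono) auto
        also have "uH - cs \<le> 2 * (cs - uL) * Bn"
        proof -
          note q = pq
          have "2 * (cs - uL) * p \<le> 2 * (cs - uL) * Bn" using p csL by (intro mult_left_mono) auto
          thus ?thesis unfolding uH_def using q by linarith
        qed
        hence "(uH - cs) / u' B \<le> 2 * (cs - uL) * Bn / u' B" using uB by (intro divide_right_mono) auto
        also have "\<dots> = C2 * exp (- real n * (rr - \<delta>))" unfolding C2_def Bn_def by simp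
        finally show ?thesis by simp
      qed
      finally show ?thesis by simp
    qed
    show "\<exists>w. is_contract \<mu> ast wl n w \<and> card (w ` space (sig \<mu> ast n)) = 2 \<and>
           IC \<mu> u c ast wl n w \<and> IR \<mu> u c ast wl n w \<and>
           expect_lb (sig \<mu> ast n) w wl \<le> ereal (wc + C2 * exp (- real n * (rr - \<delta>)))"
      using is_c card2 ICw IRw cost unfolding S_def by blast
  qed
  thus ?thesis using C2 by blast
qed

end

lemma ereal_minus_mono_const: "(x::ereal) \<le> y \<Longrightarrow> x - ereal a \<le> y - ereal a"
  by (cases x; cases y) auto

context setting begin

lemma bounds:
  assumes dp: "\<delta> > 0" and dr: "\<delta> < rr"
  shows "\<exists>C1>0. \<exists>C2>0. \<exists>N. \<forall>n\<ge>N.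
     ereal (C1 * exp (- real n * (rr + \<delta>))) \<le> C_SB \<mu> u c ast wl n - ereal wc \<and>
     C_SB \<mu> u c ast wl n - ereal wc \<le> C_bin \<mu> u c ast wl n - ereal wc \<and>
     C_bin \<mu> u c ast wl n - ereal wc \<le> ereal (C2 * exp (- real n * (rr - \<delta>)))"
proof -
  obtain C1 N1 where C1: "C1 > 0" and N1: "\<forall>n\<ge>N1. \<forall>w. is_contract \<mu> ast wl n w \<and> IC \<mu> u c ast wl n w \<and> IR \<mu> u c ast wl n w
           \<longrightarrow> ereal (wc + C1 * exp (- real n * (rr + \<delta>))) \<le> expect_lb (sig \<mu> ast n) w wl"
    using LB[OF dp] by blast
  obtain C2 N2 where C2: "C2 > 0" and N2: "\<forall>n\<ge>N2. \<exists>w. is_contract \<mu> ast wl n w \<and> card (w ` space (sig \<mu> ast n)) = 2 \<and>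
           IC \<mu> u c ast wl n w \<and> IR \<mu> u c ast wl n w \<and>
           expect_lb (sig \<mu> ast n) w wl \<le> ereal (wc + C2 * exp (- real n * (rr - \<delta>)))"
    using UB[OF dp dr] by blast
  have "\<forall>n\<ge>max N1 N2.
     ereal (C1 * exp (- real n * (rr + \<delta>))) \<le> C_SB \<mu> u c ast wl n - ereal wc \<and>
     C_SB \<mu> u c ast wl n - ereal wc \<le> C_bin \<mu> u c ast wl n - ereal wc \<and>
     C_bin \<mu> u c ast wl n - ereal wc \<le> ereal (C2 * exp (- real n * (rr - \<delta>)))"
  proof (intro allI impI conjI)
    fix n assume n: "max N1 N2 \<le> n"
    have lb: "ereal (wc + C1 * exp (- real n * (rr + \<delta>))) \<le> C_SB \<mu> u c ast wl n"
      unfolding C_SB_def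
    proof (rule Inf_greatest)
      fix y assume "y \<in> {expect_lb (sig \<mu> ast n) w wl |w. is_contract \<mu> ast wl n w \<and> IC \<mu> u c ast wl n w \<and> IR \<mu> u c ast wl n w}"
      then obtain w where "y = expect_lb (sig \<mu> ast n) w wl" "is_contract \<mu> ast wl n w \<and> IC \<mu> u c ast wl n w \<and> IR \<mu> u c ast wl n w"
        by blast
      thus "ereal (wc + C1 * exp (- real n * (rr + \<delta>))) \<le> y" using N1 n by auto
    qed
    have sb: "C_SB \<mu> u c ast wl n \<le> C_bin \<mu> u c ast wl n"
      unfolding C_SB_def C_bin_def by (rule Inf_superset_mono) blast
    obtain w where w: "is_contract \<mu> ast wl n w" "card (w ` space (sig \<mu> ast n)) = 2"
           "IC \<mu> u c ast wl n w" "IR \<mu> u c ast wl n w"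
           "expect_lb (sig \<mu> ast n) w wl \<le> ereal (wc + C2 * exp (- real n * (rr - \<delta>)))"
      using N2 n by auto
    have ub: "C_bin \<mu> u c ast wl n \<le> ereal (wc + C2 * exp (- real n * (rr - \<delta>)))"
    proof -
      have "C_bin \<mu> u c ast wl n \<le> expect_lb (sig \<mu> ast n) w wl"
        unfolding C_bin_def by (rule Inf_lower) (use w in blast)
      thus ?thesis using w(5) by simp
    qed
    show "ereal (C1 * exp (- real n * (rr + \<delta>))) \<le> C_SB \<mu> u c ast wl n - ereal wc"
      by (rule ereal_lb_shift[OF lb])
    show "C_SB \<mu> u c ast wl n - ereal wc \<le> C_bin \<mu> u c ast wl n - ereal wc"
      by (rule ereal_minus_mono_const[OF sb])
    show "C_bin \<mu> u c ast wl n - ereal wc \<le> ereal (C2 * exp (- real n * (rr - \<delta>)))"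
      by (rule ereal_ub_shift[OF ub])
  qed
  thus ?thesis using C1 C2 by blast
qed

lemma main:
  "exp_rate (\<lambda>n. C_SB \<mu> u c ast wl n - ereal wc) rr \<and>
   exp_rate (\<lambda>n. C_bin \<mu> u c ast wl n - ereal wc) rr"
proof
  show "exp_rate (\<lambda>n. C_SB \<mu> u c ast wl n - ereal wc) rr"
  proof (rule exp_rate_sandwich[OF rr_props(1)])
    fix \<delta> :: real assume "\<delta> > 0" "\<delta> < rr"
    from bounds[OF this] obtain C1 C2 N where "C1 > 0" "C2 > 0" "\<forall>n\<ge>N.
     ereal (C1 * exp (- real n * (rr + \<delta>))) \<le> C_SB \<mu> u c ast wl n - ereal wc \<and>
     C_SB \<mu> u c ast wl n - ereal wc \<le> C_bin \<mu> u c ast wl n - ereal wc \<and>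
     C_bin \<mu> u c ast wl n - ereal wc \<le> ereal (C2 * exp (- real n * (rr - \<delta>)))" by blast
    thus "\<exists>C1>0. \<exists>C2>0. \<exists>N. \<forall>n\<ge>N. ereal (C1 * exp (- real n * (rr + \<delta>))) \<le> C_SB \<mu> u c ast wl n - ereal wc \<and>
            C_SB \<mu> u c ast wl n - ereal wc \<le> ereal (C2 * exp (- real n * (rr - \<delta>)))"
      by (meson order_trans)
  qed
  show "exp_rate (\<lambda>n. C_bin \<mu> u c ast wl n - ereal wc) rr"
  proof (rule exp_rate_sandwich[OF rr_props(1)])
    fix \<delta> :: real assume "\<delta> > 0" "\<delta> < rr"
    from bounds[OF this] obtain C1 C2 N where "C1 > 0" "C2 > 0" "\<forall>n\<ge>N.
     ereal (C1 * exp (- real n * (rr + \<delta>))) \<le> C_SB \<mu> u c ast wl n - ereal wc \<and>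
     C_SB \<mu> u c ast wl n - ereal wc \<le> C_bin \<mu> u c ast wl n - ereal wc \<and>
     C_bin \<mu> u c ast wl n - ereal wc \<le> ereal (C2 * exp (- real n * (rr - \<delta>)))" by blast
    thus "\<exists>C1>0. \<exists>C2>0. \<exists>N. \<forall>n\<ge>N. ereal (C1 * exp (- real n * (rr + \<delta>))) \<le> C_bin \<mu> u c ast wl n - ereal wc \<and>
            C_bin \<mu> u c ast wl n - ereal wc \<le> ereal (C2 * exp (- real n * (rr - \<delta>)))"
      by (meson order_trans)
  qed
qed

lemma rr_eq: "rr = Min ((\<lambda>a. KL_divergence (exp 1) (\<mu> ast) (\<mu> a)) ` A_minus c ast)"
  unfolding rr_def Am_def KLa_def KL_eq by simp

end

theorem theorem1:
  fixes X :: "'x::euclidean_space set"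
    and \<mu> :: "'a::finite \<Rightarrow> 'x measure"
    and u :: "real \<Rightarrow> real" and c :: "'a \<Rightarrow> real" and ast :: 'a and wl :: real
  assumes mon: "monitoring_tech X \<mu>"
    and u_C2: "\<exists>u' u''. (\<forall>w\<ge>wl. (u has_real_derivative u' w) (at w within {wl..}) \<and>
                  (u' has_real_derivative u'' w) (at w within {wl..}) \<and>
                  u' w > 0 \<and> u'' w < 0) \<and> continuous_on {wl..} u'' \<and>
                  (u' \<longlongrightarrow> 0) at_top"
    and c_range: "range c \<subseteq> interior (u ` {wl..})"
    and c_lower: "\<exists>a. c ast > c a"
    and c_distinct: "\<forall>a. a \<noteq> ast \<longrightarrow> c a \<noteq> c ast"
  defines "r \<equiv> Min ((\<lambda>a. KL_divergence (exp 1) (\<mu> ast) (\<mu> a)) ` A_minus c ast)"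
  shows "exp_rate (\<lambda>n. C_SB \<mu> u c ast wl n - ereal (C_FB u c ast wl)) r \<and>
         exp_rate (\<lambda>n. C_bin \<mu> u c ast wl n - ereal (C_FB u c ast wl)) r"
proof -
  obtain u' u'' where d: "\<forall>w\<ge>wl. (u has_real_derivative u' w) (at w within {wl..}) \<and>
                  (u' has_real_derivative u'' w) (at w within {wl..}) \<and>
                  u' w > 0 \<and> u'' w < 0" and cont: "continuous_on {wl..} u''"
    using u_C2 by blast
  interpret S: setting u u' u'' wl X \<mu> ast c
  proof (unfold_locales)
    show "monitoring_tech X \<mu>" by (rule mon)
  qed (use d cont c_range c_lower c_distinct in auto)
  show ?thesis using S.main unfolding S.wc_def r_def S.rr_eq[symmetric] .
qed

end
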